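(* Let $G$ be an infinite, connected, bipartite graph with vertex classes coloured black and white, such that the coloured graph is quasi-transitive and every black vertex has degree $3$. Let $\phi$ be a local transformation and let $\widetilde G$ be obtained from $G$ by applying $\phi$ at each black vertex (and leaving white vertices unchanged), assumed connected. Then the connective constants $\mu=\mu(G)$ and $\widetilde\mu=\mu(\widetilde G)$ satisfy \[ \mu^{-2}=h(\widetilde\mu^{-1}),\qquad h(x)=x\,g_\phi(x). \]
   Context: All graphs are simple. For a bipartite graph with a colouring $\chi$ of its two classes, the coloured-automorphism group consists of graph automorphisms preserving colours; the coloured graph is quasi-transitive if there is a finite $W\subseteq V$ such that for every vertex $v$ some coloured automorphism $\alpha$ has $\alpha v\in W$. The connective constant of a quasi-transitive graph is $\mu=\lim_n\sigma_n(v)^{1/n}$, $\sigma_n(v)$ the number of $n$-step self-avoiding walks from $v$. Local transformation: a local transformation $\phi$ acts at a degree-$3$ vertex $v$ of a simple graph by replacing $v$ with a finite connected graph (the gadget) $\phi(v)$ having three distinct distinguished outer vertices (ports) $w_1,w_2,w_3$, each port being attached to exactly one of the three edges formerly incident to $v$ (one port per edge). It is required that (i) all gadgets $\phi(v)$ are isomorphic via isomorphisms sending ports to ports, and (ii) some subgroup of the automorphism group of $\phi(v)$ preserves the set $\{w_1,w_2,w_3\}$ and acts transitively on it. Mid-edge convention: each edge $e$ is identified with a point at its middle. Walks may start and end at mid-edges; such a walk is self-avoiding (a SAW) if it visits no vertex and no mid-edge more than once, and its length $|\pi|$ is the number of vertices it visits. Gadget series: for a degree-$3$ vertex $v$ with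 incident edges $e_1,e_2,e_3$, $g(x)=g_\phi(x)=\sum_{\pi}x^{|\pi|}$, where the sum is over all SAWs $\pi$ that start at the mid-edge of $e_1$, end at the mid-edge of $e_2$, and otherwise visit only vertices of the gadget $\phi(v)$. This polynomial does not depend on $v$ nor on the chosen pair of incident edges. *)

theory Defs
  imports Complex_Main
begin

definition simple_graph :: "'a set \<Rightarrow> ('a \<Rightarrow> 'a \<Rightarrow> bool) \<Rightarrow> bool" where
  "simple_graph V E \<longleftrightarrow>
     (\<forall>x y. E x y \<longrightarrow> x \<in> V \<and> y \<in> V) \<and> (\<forall>x y. E x y \<longrightarrow> E y x) \<and> (\<forall>x. \<not> E x x)"

definition graph_connected :: "'a set \<Rightarrow> ('a \<Rightarrow> 'a \<Rightarrow> bool) \<Rightarrow> bool" where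
  "graph_connected V E \<longleftrightarrow> (\<forall>x\<in>V. \<forall>y\<in>V. E\<^sup>*\<^sup>* x y)"

definition nbrs :: "('a \<Rightarrow> 'a \<Rightarrow> bool) \<Rightarrow> 'a \<Rightarrow> 'a set" where
  "nbrs E v = {w. E v w}"

definition locally_finite :: "'a set \<Rightarrow> ('a \<Rightarrow> 'a \<Rightarrow> bool) \<Rightarrow> bool" where
  "locally_finite V E \<longleftrightarrow> (\<forall>v\<in>V. finite (nbrs E v))"

text \<open>Bipartite with colouring chi (True = black, False = white).\<close>
definition bipartite_colouring :: "'a set \<Rightarrow> ('a \<Rightarrow> 'a \<Rightarrow> bool) \<Rightarrow> ('a \<Rightarrow> bool) \<Rightarrow> bool" where
  "bipartite_colouring V E chi \<longleftrightarrow> (\<forall>x y. E x y \<longrightarrow> chi x \<noteq> chi y)"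

definition coloured_automorphism ::
  "'a set \<Rightarrow> ('a \<Rightarrow> 'a \<Rightarrow> bool) \<Rightarrow> ('a \<Rightarrow> bool) \<Rightarrow> ('a \<Rightarrow> 'a) \<Rightarrow> bool" where
  "coloured_automorphism V E chi \<alpha> \<longleftrightarrow>
     bij_betw \<alpha> V V \<and> (\<forall>x\<in>V. \<forall>y\<in>V. E (\<alpha> x) (\<alpha> y) \<longleftrightarrow> E x y) \<and> (\<forall>x\<in>V. chi (\<alpha> x) = chi x)"

definition coloured_quasi_transitive ::
  "'a set \<Rightarrow> ('a \<Rightarrow> 'a \<Rightarrow> bool) \<Rightarrow> ('a \<Rightarrow> bool) \<Rightarrow> bool" where
  "coloured_quasi_transitive V E chi \<longleftrightarrow>
     (\<exists>W. finite W \<and> W \<subseteq> V \<and>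
        (\<forall>v\<in>V. \<exists>\<alpha>. coloured_automorphism V E chi \<alpha> \<and> \<alpha> v \<in> W))"

definition saws :: "'a set \<Rightarrow> ('a \<Rightarrow> 'a \<Rightarrow> bool) \<Rightarrow> nat \<Rightarrow> 'a \<Rightarrow> 'a list set" where
  "saws V E n v = {xs. length xs = Suc n \<and> hd xs = v \<and> set xs \<subseteq> V \<and> distinct xs \<and>
                        (\<forall>i<n. E (xs ! i) (xs ! Suc i))}"

definition sigma :: "'a set \<Rightarrow> ('a \<Rightarrow> 'a \<Rightarrow> bool) \<Rightarrow> nat \<Rightarrow> 'a \<Rightarrow> nat" where
  "sigma V E n v = card (saws V E n v)"

definition has_connective_constant :: "'a set \<Rightarrow> ('a \<Rightarrow> 'a \<Rightarrow> bool) \<Rightarrow> real \<Rightarrow> bool" where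
  "has_connective_constant V E \<mu> \<longleftrightarrow>
     (\<forall>v\<in>V. (\<lambda>n. root n (real (sigma V E n v))) \<longlonglongrightarrow> \<mu>)"

text \<open>A gadget: finite connected simple graph (Vg,Eg) with three distinct ports p 0, p 1, p 2,
  such that the port-set-preserving automorphisms act transitively on the ports.\<close>
definition gadget_automorphism :: "'c set \<Rightarrow> ('c \<Rightarrow> 'c \<Rightarrow> bool) \<Rightarrow> ('c \<Rightarrow> 'c) \<Rightarrow> bool" where
  "gadget_automorphism Vg Eg \<sigma> \<longleftrightarrow>
     bij_betw \<sigma> Vg Vg \<and> (\<forall>x\<in>Vg. \<forall>y\<in>Vg. Eg (\<sigma> x) (\<sigma> y) \<longleftrightarrow> Eg x y)"

definition local_transformation :: "'c set \<Rightarrow> ('c \<Rightarrow> 'c \<Rightarrow> bool) \<Rightarrow> (nat \<Rightarrow> 'c) \<Rightarrow> bool" where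
  "local_transformation Vg Eg p \<longleftrightarrow>
     finite Vg \<and> simple_graph Vg Eg \<and> graph_connected Vg Eg \<and>
     inj_on p {0,1,2} \<and> p ` {0,1,2} \<subseteq> Vg \<and>
     (\<exists>H. (\<forall>\<sigma>\<in>H. gadget_automorphism Vg Eg \<sigma> \<and> \<sigma> ` (p ` {0,1,2}) = p ` {0,1,2}) \<and>
          id \<in> H \<and> (\<forall>\<sigma>\<in>H. \<forall>\<tau>\<in>H. \<sigma> \<circ> \<tau> \<in> H) \<and>
          (\<forall>\<sigma>\<in>H. \<exists>\<tau>\<in>H. \<forall>x\<in>Vg. \<tau> (\<sigma> x) = x) \<and>
          (\<forall>i\<in>{0,1,2}. \<forall>j\<in>{0,1,2}. \<exists>\<sigma>\<in>H. \<sigma> (p i) = p j))"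

text \<open>Graph obtained by replacing every black vertex b by a copy of the gadget; the edge
  from b to its (white) neighbour w is attached to port p (att b w).\<close>
definition tilde_V :: "'a set \<Rightarrow> ('a \<Rightarrow> bool) \<Rightarrow> 'c set \<Rightarrow> ('a + 'a \<times> 'c) set" where
  "tilde_V V chi Vg = Inl ` {w\<in>V. \<not> chi w} \<union> {Inr (b, x) | b x. b \<in> V \<and> chi b \<and> x \<in> Vg}"

fun tilde_E :: "'a set \<Rightarrow> ('a \<Rightarrow> 'a \<Rightarrow> bool) \<Rightarrow> ('a \<Rightarrow> bool) \<Rightarrow> ('c \<Rightarrow> 'c \<Rightarrow> bool) \<Rightarrow>
    (nat \<Rightarrow> 'c) \<Rightarrow> ('a \<Rightarrow> 'a \<Rightarrow> nat) \<Rightarrow> ('a + 'a \<times> 'c) \<Rightarrow> ('a + 'a \<times> 'c) \<Rightarrow> bool" where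
  "tilde_E V E chi Eg p att (Inl u) (Inl w) = False"
| "tilde_E V E chi Eg p att (Inl w) (Inr (b, x)) =
     (w \<in> V \<and> \<not> chi w \<and> b \<in> V \<and> chi b \<and> E b w \<and> x = p (att b w))"
| "tilde_E V E chi Eg p att (Inr (b, x)) (Inl w) =
     (w \<in> V \<and> \<not> chi w \<and> b \<in> V \<and> chi b \<and> E b w \<and> x = p (att b w))"
| "tilde_E V E chi Eg p att (Inr (b, x)) (Inr (c, y)) = (b = c \<and> b \<in> V \<and> chi b \<and> Eg x y)"

text \<open>Gadget series: SAWs from the mid-edge of the edge at port p 0 to the mid-edge of the
  edge at port p 1, visiting otherwise only gadget vertices; such a walk is exactly a
  self-avoiding path in the gadget from p 0 to p 1, and its length is its number of vertices.\<close>
definition gadget_paths :: "'c set \<Rightarrow> ('c \<Rightarrow> 'c \<Rightarrow> bool) \<Rightarrow> (nat \<Rightarrow> 'c) \<Rightarrow> 'c list set" where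
  "gadget_paths Vg Eg p = {xs. xs \<noteq> [] \<and> hd xs = p 0 \<and> last xs = p 1 \<and> set xs \<subseteq> Vg \<and>
        distinct xs \<and> (\<forall>i. Suc i < length xs \<longrightarrow> Eg (xs ! i) (xs ! Suc i))}"

definition gadget_series :: "'c set \<Rightarrow> ('c \<Rightarrow> 'c \<Rightarrow> bool) \<Rightarrow> (nat \<Rightarrow> 'c) \<Rightarrow> real \<Rightarrow> real" where
  "gadget_series Vg Eg p x = (\<Sum>xs\<in>gadget_paths Vg Eg p. x ^ length xs)"

end

theory Submission
  imports Defs
begin


definition iswalk :: "('v \<Rightarrow> 'v \<Rightarrow> bool) \<Rightarrow> 'v list \<Rightarrow> bool" where
  "iswalk E xs \<longleftrightarrow> (\<forall>i. Suc i < length xs \<longrightarrow> E (xs ! i) (xs ! Suc i))"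

definition sw :: "'v set \<Rightarrow> ('v \<Rightarrow> 'v \<Rightarrow> bool) \<Rightarrow> 'v set \<Rightarrow> nat \<Rightarrow> 'v \<Rightarrow> 'v list set" where
  "sw V E B n v = {xs. length xs = Suc n \<and> hd xs = v \<and> set xs \<subseteq> V \<and> distinct xs \<and>
      iswalk E xs \<and> set xs \<inter> B = {}}"

lemma iswalk_Nil[simp]: "iswalk E []" and iswalk_single[simp]: "iswalk E [x]"
  by (auto simp: iswalk_def)

lemma iswalk_Cons: "iswalk E (x # r) \<longleftrightarrow> (r \<noteq> [] \<longrightarrow> E x (hd r)) \<and> iswalk E r"
proof
  assume a: "iswalk E (x # r)"
  have "r \<noteq> [] \<longrightarrow> E x (hd r)"
    using a[unfolded iswalk_def, rule_format, of 0] by (cases r) auto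
  moreover have "iswalk E r" unfolding iswalk_def
  proof (intro allI impI)
    fix i assume "Suc i < length r"
    then show "E (r ! i) (r ! Suc i)" using a[unfolded iswalk_def, rule_format, of "Suc i"] by simp
  qed
  ultimately show "(r \<noteq> [] \<longrightarrow> E x (hd r)) \<and> iswalk E r" by blast
next
  assume a: "(r \<noteq> [] \<longrightarrow> E x (hd r)) \<and> iswalk E r"
  show "iswalk E (x # r)" unfolding iswalk_def
  proof (intro allI impI)
    fix i assume i: "Suc i < length (x # r)"
    show "E ((x # r) ! i) ((x # r) ! Suc i)"
    proof (cases i)
      case 0 then show ?thesis using a i by (cases r) auto
    next
      case (Suc j) then show ?thesis using a i unfolding iswalk_def by auto
    qed
  qed
qed

lemma iswalk_Cons2[simp]: "iswalk E (x # y # r) \<longleftrightarrow> E x y \<and> iswalk E (y # r)"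
  by (simp add: iswalk_Cons)

lemma iswalk_append: "iswalk E (xs @ ys) \<longleftrightarrow>
   iswalk E xs \<and> iswalk E ys \<and> (xs \<noteq> [] \<longrightarrow> ys \<noteq> [] \<longrightarrow> E (last xs) (hd ys))"
  by (induction xs) (auto simp: iswalk_Cons)

lemma iswalk_map: "iswalk E (map f xs) \<longleftrightarrow> iswalk (\<lambda>a b. E (f a) (f b)) xs"
  by (induction xs) (auto simp: iswalk_Cons hd_map)

lemma iswalk_rev: "(\<And>a b. E a b \<Longrightarrow> E b a) \<Longrightarrow> iswalk E xs \<Longrightarrow> iswalk E (rev xs)"
  by (induction xs) (auto simp: iswalk_Cons iswalk_append hd_rev last_rev)

lemma iswalk_take: "iswalk E xs \<Longrightarrow> iswalk E (take k xs)"
  by (metis append_take_drop_id iswalk_append)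

lemma iswalk_drop: "iswalk E xs \<Longrightarrow> iswalk E (drop k xs)"
  by (metis append_take_drop_id iswalk_append)

lemma iswalk_mono: "iswalk E xs \<Longrightarrow> (\<And>a b. E a b \<Longrightarrow> E' a b) \<Longrightarrow> iswalk E' xs"
  by (auto simp: iswalk_def)

lemma saws_eq_sw: "saws V E n v = sw V E {} n v"
  unfolding saws_def sw_def iswalk_def by auto

lemma sw_mono: "B \<subseteq> B' \<Longrightarrow> sw V E B' n v \<subseteq> sw V E B n v"
  unfolding sw_def by auto

lemma sw_empty: assumes "v \<notin> V \<or> v \<in> B" shows "sw V E B n v = {}"
proof -
  { fix xs assume xs: "xs \<in> sw V E B n v"
    then have "xs \<noteq> []" unfolding sw_def by auto
    then have "hd xs \<in> set xs" by simp
    then have False using xs assms unfolding sw_def by auto }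
  then show ?thesis by blast
qed

lemma sw_0: "sw V E B 0 v = (if v \<in> V \<and> v \<notin> B then {[v]} else {})"
  unfolding sw_def by (auto simp: length_Suc_conv)

lemma sg_edge: "simple_graph V E \<Longrightarrow> E x y \<Longrightarrow> x \<in> V \<and> y \<in> V"
  unfolding simple_graph_def by blast
lemma sg_sym: "simple_graph V E \<Longrightarrow> E x y \<Longrightarrow> E y x"
  unfolding simple_graph_def by blast
lemma sg_irrefl: "simple_graph V E \<Longrightarrow> \<not> E x x"
  unfolding simple_graph_def by blast

lemma sw_Suc:
  assumes sg: "simple_graph V E" and v: "v \<in> V" "v \<notin> B"
  shows "sw V E B (Suc n) v = (\<Union>u\<in>nbrs E v. (#) v ` sw V E (insert v B) n u)"
proof
  show "sw V E B (Suc n) v \<subseteq> (\<Union>u\<in>nbrs E v. (#) v ` sw V E (insert v B) n u)"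
  proof
    fix xs assume xs: "xs \<in> sw V E B (Suc n) v"
    then obtain r where r: "xs = v # r" unfolding sw_def by (cases xs) auto
    with xs have "r \<noteq> []" unfolding sw_def by auto
    then have "E v (hd r)" "iswalk E r" using xs r unfolding sw_def by (auto simp: iswalk_Cons)
    moreover have "r \<in> sw V E (insert v B) n (hd r)"
      using xs r \<open>iswalk E r\<close> unfolding sw_def by auto
    ultimately show "xs \<in> (\<Union>u\<in>nbrs E v. (#) v ` sw V E (insert v B) n u)"
      using r unfolding nbrs_def by auto
  qed
next
  show "(\<Union>u\<in>nbrs E v. (#) v ` sw V E (insert v B) n u) \<subseteq> sw V E B (Suc n) v"
  proof
    fix xs assume "xs \<in> (\<Union>u\<in>nbrs E v. (#) v ` sw V E (insert v B) n u)"
    then obtain u r where u: "E v u" and r: "r \<in> sw V E (insert v B) n u" and xs: "xs = v # r"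
      unfolding nbrs_def by auto
    have "r \<noteq> []" "hd r = u" using r unfolding sw_def by auto
    then show "xs \<in> sw V E B (Suc n) v" using r u v xs unfolding sw_def by (auto simp: iswalk_Cons)
  qed
qed

lemma finite_sw:
  assumes sg: "simple_graph V E" and lf: "locally_finite V E"
  shows "finite (sw V E B n v)"
proof (induction n arbitrary: v B)
  case 0 then show ?case by (simp add: sw_0)
next
  case (Suc n)
  show ?case
  proof (cases "v \<in> V \<and> v \<notin> B")
    case True
    have "finite (nbrs E v)" using lf True unfolding locally_finite_def by auto
    then show ?thesis using True Suc by (simp add: sw_Suc[OF sg])
  next
    case False then show ?thesis by (simp add: sw_empty)
  qed
qed

lemma card_sw_Suc:
  assumes sg: "simple_graph V E" and lf: "locally_finite V E" and v: "v \<in> V" "v \<notin> B"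
  shows "card (sw V E B (Suc n) v) = (\<Sum>u\<in>nbrs E v. card (sw V E (insert v B) n u))"
proof -
  have fn: "finite (nbrs E v)" using lf v unfolding locally_finite_def by auto
  have "card (\<Union>u\<in>nbrs E v. (#) v ` sw V E (insert v B) n u) =
        (\<Sum>u\<in>nbrs E v. card ((#) v ` sw V E (insert v B) n u))"
  proof (rule card_UN_disjoint[OF fn])
    show "\<forall>u\<in>nbrs E v. finite ((#) v ` sw V E (insert v B) n u)"
      using finite_sw[OF sg lf] by auto
    show "\<forall>i\<in>nbrs E v. \<forall>j\<in>nbrs E v. i \<noteq> j \<longrightarrow>
        (#) v ` sw V E (insert v B) n i \<inter> (#) v ` sw V E (insert v B) n j = {}"
      unfolding sw_def by auto
  qed
  also have "\<dots> = (\<Sum>u\<in>nbrs E v. card (sw V E (insert v B) n u))"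
    by (intro sum.cong refl card_image) auto
  finally show ?thesis using sw_Suc[OF sg v] by simp
qed

lemma card_sw_mono:
  assumes sg: "simple_graph V E" and lf: "locally_finite V E" and "B \<subseteq> B'"
  shows "card (sw V E B' n v) \<le> card (sw V E B n v)"
  by (rule card_mono[OF finite_sw[OF sg lf] sw_mono[OF assms(3)]])

lemma sw_submult:
  assumes sg: "simple_graph V E" and lf: "locally_finite V E"
    and bnd: "\<And>u. real (card (sw V E {} n u)) \<le> \<beta>"
  shows "real (card (sw V E {} (m + n) v)) \<le> real (card (sw V E {} m v)) * \<beta>"
proof -
  let ?f = "\<lambda>xs. (take (Suc m) xs, drop m xs)"
  let ?S = "Sigma (sw V E {} m v) (\<lambda>ys. sw V E {} n (last ys))"
  have sub: "?f ` sw V E {} (m + n) v \<subseteq> ?S"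
  proof
    fix z assume "z \<in> ?f ` sw V E {} (m + n) v"
    then obtain xs where xs: "xs \<in> sw V E {} (m + n) v" and z: "z = ?f xs" by auto
    have len: "length xs = Suc (m + n)" using xs unfolding sw_def by auto
    have "last (take (Suc m) xs) = xs ! m" using len by (simp add: take_Suc_conv_app_nth)
    moreover have "hd (drop m xs) = xs ! m" using len by (simp add: hd_drop_conv_nth)
    moreover have "take (Suc m) xs \<in> sw V E {} m v"
      using xs len unfolding sw_def
      by (auto simp: iswalk_take min_def dest: in_set_takeD)
    moreover have "drop m xs \<in> sw V E {} n (xs ! m)"
      using xs len unfolding sw_def
      by (auto simp: iswalk_drop hd_drop_conv_nth dest: in_set_dropD)
    ultimately show "z \<in> ?S" using z by auto
  qed
  have inj: "inj_on ?f (sw V E {} (m + n) v)"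
  proof (rule inj_onI)
    fix xs ys assume "xs \<in> sw V E {} (m + n) v" "ys \<in> sw V E {} (m + n) v" "?f xs = ?f ys"
    then have "take (Suc m) xs = take (Suc m) ys" "drop (Suc m) xs = drop (Suc m) ys"
      by (auto simp: drop_Suc simp flip: tl_drop)
    then show "xs = ys" by (metis append_take_drop_id)
  qed
  have fS: "finite ?S" using finite_sw[OF sg lf] by auto
  have "card (sw V E {} (m + n) v) \<le> card ?S"
    using card_image[OF inj] card_mono[OF fS sub] by simp
  also have "card ?S = (\<Sum>ys\<in>sw V E {} m v. card (sw V E {} n (last ys)))"
    by (rule card_SigmaI) (use finite_sw[OF sg lf] in auto)
  finally have "real (card (sw V E {} (m + n) v)) \<le> (\<Sum>ys\<in>sw V E {} m v. real (card (sw V E {} n (last ys))))"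
    by (simp flip: of_nat_sum)
  also have "\<dots> \<le> (\<Sum>ys\<in>sw V E {} m v. \<beta>)" by (intro sum_mono bnd)
  finally show ?thesis by simp
qed


lemma sw_neighbor:
  assumes sg: "simple_graph V E" and lf: "locally_finite V E" and uv: "E u v"
  shows "card (sw V E {} n u) \<le> card (sw V E {} (Suc n) v) +
           (\<Sum>k\<le>n. card (sw V E {} k v) * card (sw V E {} (n - k) v))"
proof -
  let ?S = "sw V E {} n u"
  let ?S1 = "{xs\<in>?S. v \<notin> set xs}" and ?S2 = "{xs\<in>?S. v \<in> set xs}"
  have fin: "\<And>B n v. finite (sw V E B n v)" using finite_sw[OF sg lf] .
  have vV: "v \<in> V" and vu: "E v u" using sg_edge[OF sg uv] sg_sym[OF sg uv] by auto
  have "(#) v ` ?S1 \<subseteq> sw V E {} (Suc n) v"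
  proof
    fix ys assume "ys \<in> (#) v ` ?S1"
    then obtain xs where xs: "xs \<in> ?S" "v \<notin> set xs" and ys: "ys = v # xs" by auto
    have "xs \<noteq> []" "hd xs = u" using xs unfolding sw_def by auto
    moreover have "iswalk E xs" "set xs \<subseteq> V" "distinct xs" "length xs = Suc n" using xs unfolding sw_def by auto
    ultimately show "ys \<in> sw V E {} (Suc n) v" using xs(2) ys vV vu unfolding sw_def by (simp add: iswalk_Cons)
  qed
  moreover have "card ((#) v ` ?S1) = card ?S1" by (rule card_image) simp
  ultimately have c1: "card ?S1 \<le> card (sw V E {} (Suc n) v)"
    using card_mono[OF fin, of "(#) v ` ?S1"] by simp
  let ?F = "\<lambda>(a, b). rev a @ tl b"
  have sub2: "?S2 \<subseteq> (\<Union>k\<in>{..n}. ?F ` (sw V E {} k v \<times> sw V E {} (n - k) v))"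
  proof
    fix xs assume xs: "xs \<in> ?S2"
    then obtain k where k: "k < length xs" "xs ! k = v" by (auto simp: in_set_conv_nth)
    have len: "length xs = Suc n" using xs unfolding sw_def by auto
    have kn: "k \<le> n" using k len by simp
    have xsw: "set xs \<subseteq> V" "distinct xs" "iswalk E xs" using xs unfolding sw_def by auto
    have tk: "take (Suc k) xs = take k xs @ [v]" using k by (simp add: take_Suc_conv_app_nth)
    have a: "rev (take (Suc k) xs) \<in> sw V E {} k v"
    proof -
      have "length (rev (take (Suc k) xs)) = Suc k" using k by simp
      moreover have "hd (rev (take (Suc k) xs)) = v" unfolding tk by simp
      moreover have "set (rev (take (Suc k) xs)) \<subseteq> V" using xsw(1) set_take_subset by fastforce
      moreover have "distinct (rev (take (Suc k) xs))" using xsw(2) by simp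
      moreover have "iswalk E (rev (take (Suc k) xs))"
        using iswalk_rev[OF _ iswalk_take[OF xsw(3)]] sg_sym[OF sg] by blast
      ultimately show ?thesis unfolding sw_def by blast
    qed
    have b: "drop k xs \<in> sw V E {} (n - k) v"
    proof -
      have "length (drop k xs) = Suc (n - k)" using len kn by simp
      moreover have "hd (drop k xs) = v" using k by (simp add: hd_drop_conv_nth)
      moreover have "set (drop k xs) \<subseteq> V" using xsw(1) set_drop_subset by fastforce
      moreover have "distinct (drop k xs)" using xsw(2) by simp
      moreover have "iswalk E (drop k xs)" by (rule iswalk_drop[OF xsw(3)])
      ultimately show ?thesis unfolding sw_def by blast
    qed
    have "tl (drop k xs) = drop (Suc k) xs" by (simp add: drop_Suc tl_drop)
    then have "?F (rev (take (Suc k) xs), drop k xs) = xs" by simp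
    then have "xs \<in> ?F ` (sw V E {} k v \<times> sw V E {} (n - k) v)"
      using a b by (intro image_eqI[of _ _ "(rev (take (Suc k) xs), drop k xs)"]) auto
    then show "xs \<in> (\<Union>k\<in>{..n}. ?F ` (sw V E {} k v \<times> sw V E {} (n - k) v))"
      using kn by blast
  qed
  have "card ?S2 \<le> card (\<Union>k\<in>{..n}. ?F ` (sw V E {} k v \<times> sw V E {} (n - k) v))"
    by (rule card_mono[OF _ sub2]) (intro finite_UN_I finite_imageI finite_cartesian_product finite_atMost fin)
  also have "\<dots> \<le> (\<Sum>k\<le>n. card (?F ` (sw V E {} k v \<times> sw V E {} (n - k) v)))"
    by (rule card_UN_le) simp
  also have "\<dots> \<le> (\<Sum>k\<le>n. card (sw V E {} k v) * card (sw V E {} (n - k) v))"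
  proof (intro sum_mono)
    fix k
    have "card (?F ` (sw V E {} k v \<times> sw V E {} (n - k) v)) \<le> card (sw V E {} k v \<times> sw V E {} (n - k) v)"
      by (rule card_image_le) (simp add: fin)
    then show "card (?F ` (sw V E {} k v \<times> sw V E {} (n - k) v)) \<le> card (sw V E {} k v) * card (sw V E {} (n - k) v)"
      by (simp add: card_cartesian_product)
  qed
  finally have c2: "card ?S2 \<le> (\<Sum>k\<le>n. card (sw V E {} k v) * card (sw V E {} (n - k) v))" .
  have "?S = ?S1 \<union> ?S2" by auto
  then have "card ?S \<le> card ?S1 + card ?S2" using card_Un_le[of ?S1 ?S2] by simp
  then show ?thesis using c1 c2 by linarith
qed

lemma walk_exists:
  assumes "E\<^sup>*\<^sup>* a b"
  shows "\<exists>xs. xs \<noteq> [] \<and> hd xs = a \<and> last xs = b \<and> iswalk E xs"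
  using assms
proof (induction rule: rtranclp_induct)
  case base then show ?case by (intro exI[of _ "[a]"]) auto
next
  case (step y z)
  then obtain xs where "xs \<noteq> [] \<and> hd xs = a \<and> last xs = y \<and> iswalk E xs" by blast
  then show ?case by (intro exI[of _ "xs @ [z]"]) (auto simp: iswalk_append step)
qed

lemma walk_shorten:
  assumes "xs \<noteq> []" "iswalk E xs"
  shows "\<exists>ys. ys \<noteq> [] \<and> hd ys = hd xs \<and> last ys = last xs \<and> distinct ys \<and> iswalk E ys \<and>
     set ys \<subseteq> set xs \<and> length ys \<le> length xs"
  using assms
proof (induction "length xs" arbitrary: xs rule: less_induct)
  case less
  show ?case
  proof (cases "distinct xs")
    case True then show ?thesis using less.prems by blast
  next
    case False
    then obtain as y bs cs where xs: "xs = as @ [y] @ bs @ [y] @ cs"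
      using not_distinct_decomp by blast
    let ?zs = "as @ [y] @ cs"
    have e1: "as @ [y] = take (Suc (length as)) xs" unfolding xs by simp
    have e2: "y # cs = drop (Suc (length as + length bs)) xs" unfolding xs by simp
    have w1: "iswalk E (as @ [y])" unfolding e1 by (rule iswalk_take[OF less.prems(2)])
    have w2: "iswalk E (y # cs)" unfolding e2 by (rule iswalk_drop[OF less.prems(2)])
    have w: "iswalk E ?zs" using w1 w2 iswalk_append[of E "as @ [y]" cs] iswalk_Cons[of E y cs] by auto
    have "length ?zs < length xs" using xs by simp
    from less.hyps[OF this _ w] obtain ys where ys: "ys \<noteq> [] \<and> hd ys = hd ?zs \<and> last ys = last ?zs \<and>
        distinct ys \<and> iswalk E ys \<and> set ys \<subseteq> set ?zs \<and> length ys \<le> length ?zs" by auto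
    have h: "hd ?zs = hd xs" unfolding xs by (cases as) simp_all
    have l: "last ?zs = last xs" unfolding xs by simp
    have s: "set ?zs \<subseteq> set xs" unfolding xs by auto
    have le: "length ?zs \<le> length xs" unfolding xs by simp
    show ?thesis
    proof (intro exI[of _ ys] conjI)
      show "set ys \<subseteq> set xs" using ys s by blast
      show "length ys \<le> length xs" using ys le by linarith
    qed (use ys h l in auto)
  qed
qed

lemma path_exists:
  assumes "E\<^sup>*\<^sup>* a b"
  shows "\<exists>xs. xs \<noteq> [] \<and> hd xs = a \<and> last xs = b \<and> distinct xs \<and> iswalk E xs"
proof -
  obtain xs where xs: "xs \<noteq> []" "hd xs = a" "last xs = b" "iswalk E xs"
    using walk_exists[OF assms] by blast
  from walk_shorten[OF xs(1,4)] xs(2,3) show ?thesis by auto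
qed

lemma iswalk_set:
  assumes sg: "simple_graph V E"
  shows "iswalk E ys \<Longrightarrow> ys \<noteq> [] \<Longrightarrow> hd ys \<in> V \<Longrightarrow> set ys \<subseteq> V"
proof (induction ys)
  case Nil then show ?case by simp
next
  case (Cons y ys)
  then show ?case using sg_edge[OF sg] by (cases ys) (auto simp: iswalk_Cons)
qed

lemma saw_exists:
  assumes sg: "simple_graph V E" and lf: "locally_finite V E" and inf: "infinite V"
    and con: "graph_connected V E" and v: "v \<in> V"
  shows "sw V E {} n v \<noteq> {}"
proof -
  let ?F = "\<Union>k\<in>{..n}. last ` sw V E {} k v"
  have "finite ?F" using finite_sw[OF sg lf] by auto
  then have "infinite (V - ?F)" using inf by (metis Diff_infinite_finite)
  then obtain u where u: "u \<in> V" "u \<notin> ?F" by (metis Diff_iff finite.emptyI ex_in_conv)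
  then have "E\<^sup>*\<^sup>* v u" using con v unfolding graph_connected_def by auto
  then obtain ys where ys: "ys \<noteq> []" "hd ys = v" "last ys = u" "distinct ys" "iswalk E ys"
    using path_exists by metis
  have sV: "set ys \<subseteq> V" using iswalk_set[OF sg ys(5,1)] ys v by auto
  show ?thesis
  proof (cases "length ys \<le> Suc n")
    case True
    have "ys \<in> sw V E {} (length ys - 1) v" using ys sV unfolding sw_def by auto
    then have "u \<in> ?F" using True ys(3) by (intro UN_I[of "length ys - 1"]) auto
    then show ?thesis using u by blast
  next
    case False
    have "take (Suc n) ys \<in> sw V E {} n v"
      using ys sV False unfolding sw_def by (auto simp: iswalk_take dest: in_set_takeD)
    then show ?thesis by blast
  qed
qed


lemma fekete_like:
  fixes a :: "nat \<Rightarrow> real"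
  assumes a1: "\<And>n. 1 \<le> a n" and sub: "\<And>m n. a (m + n) \<le> a m * a n"
  defines "L \<equiv> (INF n\<in>{1..}. root n (a n))"
  shows "1 \<le> L" and "\<And>n. L ^ n \<le> a n" and "\<And>\<epsilon>. 0 < \<epsilon> \<Longrightarrow> \<exists>C. \<forall>n. a n \<le> C * (L + \<epsilon>) ^ n"
proof -
  have r1: "1 \<le> root n (a n)" if "1 \<le> n" for n
  proof -
    have "root n 1 \<le> root n (a n)" using that a1[of n] by simp
    then show ?thesis using that by simp
  qed
  have bdd: "bdd_below ((\<lambda>n. root n (a n)) ` {1..})"
    by (rule bdd_belowI[of _ 1]) (auto intro: r1 a1)
  show L1: "1 \<le> L" unfolding L_def by (rule cINF_greatest) (auto intro: r1 a1)
  show Ln: "L ^ n \<le> a n" for n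
  proof (cases "n = 0")
    case True then show ?thesis using a1[of 0] by simp
  next
    case False
    then have "L \<le> root n (a n)" unfolding L_def by (intro cINF_lower[OF bdd]) auto
    then have "L ^ n \<le> root n (a n) ^ n" using L1 by (intro power_mono) auto
    also have "\<dots> = a n" using False a1[of n] by simp
    finally show ?thesis .
  qed
  fix \<epsilon> :: real assume e: "0 < \<epsilon>"
  have "L < L + \<epsilon>" using e by simp
  then have "(INF n\<in>{1..}. root n (a n)) < L + \<epsilon>" unfolding L_def .
  then have "\<exists>k\<in>{1..}. root k (a k) < L + \<epsilon>"
    by (subst (asm) cINF_less_iff[OF _ bdd]) auto
  then obtain k where k: "k \<in> {1..}" "root k (a k) < L + \<epsilon>" by blast
  have k1: "0 < k" using k by auto
  have ak: "a k \<le> (L + \<epsilon>) ^ k"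
  proof -
    have "root k (a k) ^ k \<le> (L + \<epsilon>) ^ k"
      using k(2) by (intro power_mono) (auto simp: real_root_ge_zero a1 order_trans[OF zero_le_one a1])
    then show ?thesis using k1 a1[of k] by simp
  qed
  have pw: "a (q * k + r) \<le> a k ^ q * a r" for q r
  proof (induction q)
    case 0 then show ?case by simp
  next
    case (Suc q)
    have "a (Suc q * k + r) = a (k + (q * k + r))" by (simp add: algebra_simps)
    also have "\<dots> \<le> a k * a (q * k + r)" by (rule sub)
    also have "\<dots> \<le> a k * (a k ^ q * a r)"
      using Suc a1[of k] by (intro mult_left_mono) auto
    finally show ?case by (simp add: algebra_simps)
  qed
  define C where "C = (\<Sum>r<k. a r)"
  show "\<exists>C. \<forall>n. a n \<le> C * (L + \<epsilon>) ^ n"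
  proof (intro exI[of _ C] allI)
    fix n
    define q where "q = n div k"
    define r where "r = n mod k"
    have n: "n = q * k + r" unfolding q_def r_def by simp
    have rk: "r < k" unfolding r_def using k1 by simp
    have Le1: "1 \<le> L + \<epsilon>" using L1 e by simp
    have "a n \<le> a k ^ q * a r" unfolding n by (rule pw)
    also have "\<dots> \<le> ((L + \<epsilon>) ^ k) ^ q * a r"
      using ak a1 by (intro mult_right_mono power_mono) (auto intro: order_trans[OF zero_le_one])
    also have "((L + \<epsilon>) ^ k) ^ q = (L + \<epsilon>) ^ (q * k)" by (simp add: power_mult mult.commute)
    also have "(L + \<epsilon>) ^ (q * k) \<le> (L + \<epsilon>) ^ n" using Le1 n by (intro power_increasing) auto
    then have "(L + \<epsilon>) ^ (q * k) * a r \<le> (L + \<epsilon>) ^ n * a r"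
      using a1[of r] by (intro mult_right_mono) (auto intro: order_trans[OF zero_le_one])
    also have "a r \<le> C" unfolding C_def
      using rk a1 by (intro member_le_sum) (auto intro: order_trans[OF zero_le_one])
    then have "(L + \<epsilon>) ^ n * a r \<le> (L + \<epsilon>) ^ n * C"
      using Le1 by (intro mult_left_mono) auto
    finally show "a n \<le> C * (L + \<epsilon>) ^ n" by (simp add: mult.commute)
  qed
qed

lemma exp_beats_linear:
  fixes a b :: real
  assumes b: "0 < b" "b < a"
  shows "\<exists>c>0. \<forall>n. c * b ^ n * (2 * real n + 1) \<le> a ^ n"
proof -
  define t where "t = a / b"
  have t1: "1 < t" using b unfolding t_def by simp
  define c where "c = min 1 ((t - 1) / 2)"
  have c0: "0 < c" using t1 unfolding c_def by simp
  have cl: "c * (2 * real n + 1) \<le> t ^ n" for n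
  proof -
    have "1 + real n * (t - 1) \<le> (1 + (t - 1)) ^ n"
      by (rule Bernoulli_inequality) (use t1 in simp)
    then have bern: "1 + real n * (t - 1) \<le> t ^ n" by simp
    have "c * (2 * real n + 1) \<le> 1 + real n * (t - 1)"
    proof (cases "1 \<le> (t - 1) / 2")
      case True
      then have "c = 1" unfolding c_def by simp
      moreover have "real n * 2 \<le> real n * (t - 1)" using True
        by (intro mult_left_mono) auto
      ultimately show ?thesis by simp
    next
      case False
      then have "c = (t - 1) / 2" unfolding c_def by simp
      then have ceq: "t = 2 * c + 1" by simp
      have "c * (2 * real n + 1) = real n * (t - 1) + c" unfolding ceq by (simp add: algebra_simps)
      moreover have "c \<le> 1" unfolding c_def by simp
      ultimately show ?thesis by linarith
    qed
    then show ?thesis using bern by linarith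
  qed
  show ?thesis
  proof (intro exI[of _ c] conjI allI c0)
    fix n
    have "c * b ^ n * (2 * real n + 1) = b ^ n * (c * (2 * real n + 1))" by simp
    also have "\<dots> \<le> b ^ n * t ^ n" using cl b by (intro mult_left_mono) auto
    also have "\<dots> = a ^ n" unfolding t_def using b by (simp add: power_divide)
    finally show "c * b ^ n * (2 * real n + 1) \<le> a ^ n" .
  qed
qed

lemma one_step:
  fixes s :: "'v \<Rightarrow> nat \<Rightarrow> real"
  assumes nn: "\<And>u j. 0 \<le> s u j"
    and nb: "s y (2*n) \<le> s y' (Suc (2*n)) + (\<Sum>k\<le>2*n. s y' k * s y' (2*n - k))"
    and sm: "\<And>m j. s y' (m + j) \<le> s y' m * (C * K ^ j)"
    and U: "\<And>j. s y' j \<le> C * K ^ j"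
    and C1: "1 \<le> C" and K1: "1 \<le> K"
  shows "s y (2*n) \<le> 2 * (2 * real n + 1) * C^2 * K^(n+1) * s y' n"
proof -
  define A where "A = s y (2*n)"
  define T where "T = 2 * (2 * real n + 1) * C^2 * K^(n+1)"
  define N where "N = 2 * n"
  have sn: "0 \<le> s y' n" by (rule nn)
  have Kp: "0 < K" using K1 by simp
  show ?thesis
  proof (cases "A \<le> 2 * s y' (Suc N)")
    case True
    have "s y' (Suc N) = s y' (n + Suc n)" unfolding N_def by (simp add: mult_2)
    also have "\<dots> \<le> s y' n * (C * K ^ Suc n)" by (rule sm)
    finally have "A \<le> 2 * C * K ^ (n+1) * s y' n" using True by (simp add: algebra_simps)
    also have "2 * C * K ^ (n+1) \<le> T" unfolding T_def
    proof -
      have "C * 1 \<le> C * C" using C1 by (intro mult_left_mono) auto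
      also have "1 * (C * C) \<le> (2 * real n + 1) * (C * C)"
        using C1 by (intro mult_right_mono) auto
      finally have "C \<le> (2 * real n + 1) * C^2" by (simp add: power2_eq_square)
      then have "2 * C * K ^ (n+1) \<le> 2 * ((2 * real n + 1) * C^2) * K^(n+1)"
        using Kp by (intro mult_right_mono) auto
      then show "2 * C * K ^ (n+1) \<le> 2 * (2 * real n + 1) * C^2 * K^(n+1)" by (simp add: algebra_simps)
    qed
    then have "2 * C * K ^ (n+1) * s y' n \<le> T * s y' n" using sn by (rule mult_right_mono)
    finally show ?thesis unfolding A_def T_def .
  next
    case False
    have "A \<le> s y' (Suc N) + (\<Sum>k\<le>N. s y' k * s y' (N - k))" using nb unfolding A_def N_def .
    then have As: "A \<le> 2 * (\<Sum>k\<le>N. s y' k * s y' (N - k))" using False by linarith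
    obtain k where kN: "k \<le> N" and kA: "A \<le> 2 * (real N + 1) * (s y' k * s y' (N - k))"
    proof (rule ccontr)
      assume "\<not> thesis"
      with that have lt: "\<And>k. k \<le> N \<Longrightarrow> 2 * (real N + 1) * (s y' k * s y' (N - k)) < A"
        by (meson not_le)
      have "(\<Sum>k\<le>N. 2 * (real N + 1) * (s y' k * s y' (N - k))) < (\<Sum>k\<le>N. A)"
        by (rule sum_strict_mono) (use lt in auto)
      moreover have "(\<Sum>k\<le>N. 2 * (real N + 1) * (s y' k * s y' (N - k))) =
          2 * (real N + 1) * (\<Sum>k\<le>N. s y' k * s y' (N - k))" by (rule sum_distrib_left[symmetric])
      moreover have "(\<Sum>k\<le>N. A) = (real N + 1) * A" by simp
      ultimately have "2 * (real N + 1) * (\<Sum>k\<le>N. s y' k * s y' (N - k)) < (real N + 1) * A"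
        by (simp add: add.commute)
      then have "(real N + 1) * (2 * (\<Sum>k\<le>N. s y' k * s y' (N - k))) < (real N + 1) * A"
        by (simp add: algebra_simps)
      then have "2 * (\<Sum>k\<le>N. s y' k * s y' (N - k)) < A"
        using mult_less_cancel_left_pos[of "real N + 1"] by simp
      then show False using As by linarith
    qed
    have prod: "s y' k * s y' (N - k) \<le> s y' n * (C^2 * K ^ n)"
    proof (cases "n \<le> k")
      case True
      have "s y' k = s y' (n + (k - n))" using True by simp
      also have "\<dots> \<le> s y' n * (C * K ^ (k - n))" by (rule sm)
      finally have a: "s y' k \<le> s y' n * (C * K ^ (k - n))" .
      have b: "s y' (N - k) \<le> C * K ^ (N - k)" by (rule U)
      have "s y' k * s y' (N - k) \<le> (s y' n * (C * K ^ (k - n))) * (C * K ^ (N - k))"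
        using a b nn C1 K1 by (intro mult_mono) (auto intro!: mult_nonneg_nonneg)
      also have "\<dots> = s y' n * (C^2 * (K ^ (k - n) * K ^ (N - k)))" by (simp add: power2_eq_square algebra_simps)
      also have "K ^ (k - n) * K ^ (N - k) = K ^ n"
        using True kN unfolding N_def by (simp flip: power_add)
      finally show ?thesis by simp
    next
      case False
      have "s y' (N - k) = s y' (n + (N - k - n))" using False unfolding N_def by (simp add: mult_2)
      also have "\<dots> \<le> s y' n * (C * K ^ (N - k - n))" by (rule sm)
      finally have a: "s y' (N - k) \<le> s y' n * (C * K ^ (N - k - n))" .
      have b: "s y' k \<le> C * K ^ k" by (rule U)
      have "s y' k * s y' (N - k) \<le> (C * K ^ k) * (s y' n * (C * K ^ (N - k - n)))"
        using a b nn C1 K1 by (intro mult_mono) (auto intro!: mult_nonneg_nonneg)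
      also have "\<dots> = s y' n * (C^2 * (K ^ k * K ^ (N - k - n)))" by (simp add: power2_eq_square algebra_simps)
      also have "K ^ k * K ^ (N - k - n) = K ^ n"
        using False kN unfolding N_def by (simp flip: power_add)
      finally show ?thesis by simp
    qed
    have "A \<le> 2 * (real N + 1) * (s y' n * (C^2 * K ^ n))"
    proof -
      have "2 * (real N + 1) * (s y' k * s y' (N - k)) \<le> 2 * (real N + 1) * (s y' n * (C^2 * K ^ n))"
        using prod by (intro mult_left_mono) auto
      then show ?thesis using kA by linarith
    qed
    also have "\<dots> \<le> T * s y' n"
    proof -
      have "K ^ n \<le> K ^ (n+1)" using K1 by (intro power_increasing) auto
      then have th: "2 * (real N + 1) * (C^2 * K ^ n) \<le> 2 * (real N + 1) * (C^2 * K ^ (n+1))"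
        by (intro mult_left_mono) auto
      have "2 * (real N + 1) * (C^2 * K ^ n) * s y' n \<le> 2 * (real N + 1) * (C^2 * K ^ (n+1)) * s y' n"
        using sn by (rule mult_right_mono[OF th])
      then show ?thesis unfolding T_def N_def by (simp add: algebra_simps)
    qed
    finally show ?thesis unfolding A_def T_def .
  qed
qed


abbreviation sc :: "'v set \<Rightarrow> ('v \<Rightarrow> 'v \<Rightarrow> bool) \<Rightarrow> 'v \<Rightarrow> nat \<Rightarrow> real" where
  "sc V E u j \<equiv> real (card (sw V E {} j u))"

definition nearQ :: "'v set \<Rightarrow> ('v \<Rightarrow> 'v \<Rightarrow> bool) \<Rightarrow> real \<Rightarrow> 'v \<Rightarrow> nat \<Rightarrow> bool" where
  "nearQ V E \<mu> v r \<longleftrightarrow> (\<forall>\<delta>. 0 < \<delta> \<longrightarrow> \<delta> < \<mu> \<longrightarrow>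
     (\<exists>c>0. \<forall>n. \<exists>y\<in>V. (\<exists>k\<le>r. (E ^^ k) y v) \<and> c * (\<mu> - \<delta>) ^ n \<le> sc V E y n))"

definition unif_bound :: "'v set \<Rightarrow> ('v \<Rightarrow> 'v \<Rightarrow> bool) \<Rightarrow> real \<Rightarrow> bool" where
  "unif_bound V E \<mu> \<longleftrightarrow> (\<forall>\<epsilon>>0. \<exists>C. \<forall>u\<in>V. \<forall>j. sc V E u j \<le> C * (\<mu> + \<epsilon>) ^ j)"

lemma arith_eps:
  fixes \<mu> \<delta> :: real
  assumes "0 < \<delta>" "\<delta> < \<mu>"
  shows "(\<mu> - \<delta>/2) * (\<mu> + \<delta>/12) \<le> (\<mu> - \<delta>/12)^2"
proof -
  have "(\<mu> - \<delta>/12)^2 - (\<mu> - \<delta>/2) * (\<mu> + \<delta>/12) = \<delta> * \<mu> / 4 + 7 * \<delta> * \<delta> / 144"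
    by (simp add: power2_eq_square field_simps)
  moreover have "0 \<le> \<delta> * \<mu> / 4 + 7 * \<delta> * \<delta> / 144" using assms by simp
  ultimately show ?thesis by linarith
qed

lemma nearQ_step:
  assumes sg: "simple_graph V E" and lf: "locally_finite V E" and mu1: "1 \<le> \<mu>"
    and U: "unif_bound V E \<mu>" and Q: "nearQ V E \<mu> v (Suc r)"
  shows "nearQ V E \<mu> v r"
  unfolding nearQ_def
proof (intro allI impI)
  fix \<delta> :: real assume d: "0 < \<delta>" "\<delta> < \<mu>"
  define \<epsilon> where "\<epsilon> = \<delta> / 12"
  have e: "0 < \<epsilon>" "\<epsilon> < \<mu>" using d unfolding \<epsilon>_def by auto
  obtain c1 where c1: "c1 > 0" and c1n: "\<And>n. \<exists>y\<in>V. (\<exists>k\<le>Suc r. (E ^^ k) y v) \<and> c1 * (\<mu> - \<epsilon>) ^ n \<le> sc V E y n"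
    using Q e unfolding nearQ_def by blast
  obtain C0 where C0: "\<And>u j. u \<in> V \<Longrightarrow> sc V E u j \<le> C0 * (\<mu> + \<epsilon>) ^ j"
    using U e unfolding unif_bound_def by blast
  define C where "C = max C0 1"
  define K where "K = \<mu> + \<epsilon>"
  have C1: "1 \<le> C" and K1: "1 \<le> K" using mu1 e unfolding C_def K_def by auto
  have UC: "sc V E u j \<le> C * K ^ j" for u j
  proof (cases "u \<in> V")
    case True
    have "C0 * K ^ j \<le> C * K ^ j" unfolding C_def using K1 by (intro mult_right_mono) auto
    then show ?thesis using C0[OF True, of j] unfolding K_def by simp
  next
    case False
    then have "sw V E {} j u = {}" by (simp add: sw_empty)
    then show ?thesis using C1 K1 by simp
  qed
  have sm: "sc V E u (m + j) \<le> sc V E u m * (C * K ^ j)" for u m j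
    by (rule sw_submult[OF sg lf UC])
  obtain c0 where c0: "c0 > 0" and c0n: "\<And>n. c0 * (\<mu> - \<delta>) ^ n * (2 * real n + 1) \<le> (\<mu> - \<delta>/2) ^ n"
    using exp_beats_linear[of "\<mu> - \<delta>" "\<mu> - \<delta>/2"] d by auto
  define c where "c = c1 * c0 / (2 * C^2 * K)"
  have cpos: "c > 0" unfolding c_def using c1 c0 C1 K1 by simp
  show "\<exists>c>0. \<forall>n. \<exists>y\<in>V. (\<exists>k\<le>r. (E ^^ k) y v) \<and> c * (\<mu> - \<delta>) ^ n \<le> sc V E y n"
  proof (intro exI[of _ c] conjI allI cpos)
    fix n
    define T where "T = 2 * (2 * real n + 1) * C^2 * K^(n+1)"
    obtain y k where y: "y \<in> V" "k \<le> Suc r" "(E ^^ k) y v" "c1 * (\<mu> - \<epsilon>) ^ (2*n) \<le> sc V E y (2*n)"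
      using c1n[of "2*n"] by blast
    have "\<exists>y'\<in>V. (\<exists>k\<le>r. (E ^^ k) y' v) \<and> sc V E y (2*n) \<le> T * sc V E y' n"
    proof (cases "k \<le> r")
      case True
      have "sc V E y (2*n) = sc V E y (n + n)" by (simp add: mult_2)
      also have "\<dots> \<le> sc V E y n * (C * K ^ n)" by (rule sm)
      also have "\<dots> \<le> sc V E y n * T"
      proof (rule mult_left_mono)
        have "C * K ^ n \<le> C^2 * K^(n+1)"
        proof -
          have "C * K ^ n \<le> (C * C) * (K ^ n * K)"
            using C1 K1 by (intro mult_mono) (auto simp: order_trans[OF _ mult_right_mono, of 1 C])
          then show ?thesis by (simp add: power2_eq_square algebra_simps)
        qed
        also have "\<dots> \<le> T" unfolding T_def using C1 K1
        proof -
          have "1 * (C^2 * K^(n+1)) \<le> (2 * (2 * real n + 1)) * (C^2 * K^(n+1))"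
            using C1 K1 by (intro mult_right_mono) auto
          then show "C^2 * K^(n+1) \<le> 2 * (2 * real n + 1) * C^2 * K^(n+1)" by (simp add: algebra_simps)
        qed
        finally show "C * K ^ n \<le> T" .
      qed simp
      finally show ?thesis using y True by (intro bexI[of _ y]) (auto simp: mult.commute)
    next
      case False
      then have kk: "k = Suc r" using y(2) by simp
      then obtain y' where y': "E y y'" "(E ^^ r) y' v" using y(3) relpowp_Suc_D2 by metis
      have y'V: "y' \<in> V" using sg_edge[OF sg y'(1)] by simp
      have nb: "sc V E y (2*n) \<le> sc V E y' (Suc (2*n)) + (\<Sum>k\<le>2*n. sc V E y' k * sc V E y' (2*n - k))"
        using sw_neighbor[OF sg lf y'(1), of "2*n"] by (simp flip: of_nat_add of_nat_mult of_nat_sum of_nat_le_iff)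
      have "sc V E y (2*n) \<le> T * sc V E y' n"
        unfolding T_def by (rule one_step[OF _ nb sm UC C1 K1]) simp
      then show ?thesis using y'V y'(2) by blast
    qed
    then obtain y' where y': "y' \<in> V" "\<exists>k\<le>r. (E ^^ k) y' v" "sc V E y (2*n) \<le> T * sc V E y' n" by blast
    have "c1 * (c0 * (\<mu> - \<delta>) ^ n * (2 * real n + 1)) * K ^ n \<le> c1 * (\<mu> - \<delta>/2) ^ n * K ^ n"
      using c0n[of n] c1 K1 by (intro mult_right_mono mult_left_mono) auto
    also have "\<dots> = c1 * ((\<mu> - \<delta>/2) * K) ^ n" by (simp add: power_mult_distrib)
    also have "\<dots> \<le> c1 * ((\<mu> - \<epsilon>)^2) ^ n"
      using arith_eps[OF d] d c1 unfolding K_def \<epsilon>_def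
      by (intro mult_left_mono power_mono) (auto intro!: mult_nonneg_nonneg)
    also have "\<dots> = c1 * (\<mu> - \<epsilon>) ^ (2*n)" by (simp add: power_mult)
    also have "\<dots> \<le> T * sc V E y' n" using y(4) y'(3) by linarith
    finally have main: "(c1 * c0 * (\<mu> - \<delta>) ^ n) * ((2 * real n + 1) * K ^ n) \<le>
        (2 * C^2 * K * sc V E y' n) * ((2 * real n + 1) * K ^ n)"
      unfolding T_def by (simp add: algebra_simps)
    have P: "0 < (2 * real n + 1) * K ^ n" using K1 by simp
    have "c1 * c0 * (\<mu> - \<delta>) ^ n \<le> 2 * C^2 * K * sc V E y' n"
      using main P by (simp add: mult_le_cancel_right_pos)
    then have "c * (\<mu> - \<delta>) ^ n \<le> sc V E y' n"
      unfolding c_def using C1 K1 by (simp add: field_simps)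
    then show "\<exists>y\<in>V. (\<exists>k\<le>r. (E ^^ k) y v) \<and> c * (\<mu> - \<delta>) ^ n \<le> sc V E y n"
      using y' by blast
  qed
qed

lemma nearQ_lower:
  assumes sg: "simple_graph V E" and lf: "locally_finite V E" and mu1: "1 \<le> \<mu>"
    and U: "unif_bound V E \<mu>" and Q: "nearQ V E \<mu> v R"
  shows "\<forall>\<delta>. 0 < \<delta> \<longrightarrow> \<delta> < \<mu> \<longrightarrow> (\<exists>c>0. \<forall>n. c * (\<mu> - \<delta>) ^ n \<le> sc V E v n)"
proof -
  have "nearQ V E \<mu> v 0" using Q
  proof (induction R)
    case 0 then show ?case .
  next
    case (Suc R) then show ?case using nearQ_step[OF sg lf mu1 U] by blast
  qed
  then show ?thesis unfolding nearQ_def by auto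
qed

lemma root_lim:
  fixes f :: "nat \<Rightarrow> real"
  assumes mu: "0 < \<mu>" and nn: "\<And>n. 0 \<le> f n"
    and low: "\<forall>\<delta>. 0 < \<delta> \<longrightarrow> \<delta> < \<mu> \<longrightarrow> (\<exists>c>0. \<forall>n. c * (\<mu> - \<delta>) ^ n \<le> f n)"
    and up: "\<forall>\<epsilon>>0. \<exists>C. \<forall>n. f n \<le> C * (\<mu> + \<epsilon>) ^ n"
  shows "(\<lambda>n. root n (f n)) \<longlonglongrightarrow> \<mu>"
proof (rule order_tendstoI)
  fix a assume a: "a < \<mu>"
  define \<delta> where "\<delta> = min ((\<mu> - a) / 2) (\<mu> / 2)"
  have d: "0 < \<delta>" "\<delta> < \<mu>" "a < \<mu> - \<delta>" using a mu unfolding \<delta>_def by (auto simp: min_def field_simps)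
  obtain c where c: "c > 0" "\<And>n. c * (\<mu> - \<delta>) ^ n \<le> f n" using low d by blast
  have "(\<lambda>n. root n c * (\<mu> - \<delta>)) \<longlonglongrightarrow> 1 * (\<mu> - \<delta>)"
    by (intro tendsto_mult_right LIMSEQ_root_const c)
  then have ev: "eventually (\<lambda>n. a < root n c * (\<mu> - \<delta>)) sequentially"
    using d by (intro order_tendstoD(1)) auto
  show "eventually (\<lambda>n. a < root n (f n)) sequentially"
    using ev eventually_ge_at_top[of 1]
  proof (rule eventually_elim2)
    fix n :: nat assume n: "a < root n c * (\<mu> - \<delta>)" "1 \<le> n"
    have "root n c * (\<mu> - \<delta>) = root n (c * (\<mu> - \<delta>) ^ n)"
      using n d by (simp add: real_root_mult real_root_power_cancel)
    also have "\<dots> \<le> root n (f n)" using n c by simp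
    finally show "a < root n (f n)" using n by simp
  qed
next
  fix a assume a: "\<mu> < a"
  define \<epsilon> where "\<epsilon> = (a - \<mu>) / 2"
  have e: "0 < \<epsilon>" "\<mu> + \<epsilon> < a" using a unfolding \<epsilon>_def by (auto simp: field_simps)
  obtain C0 where C0: "\<And>n. f n \<le> C0 * (\<mu> + \<epsilon>) ^ n" using up e by blast
  define C where "C = max C0 1"
  have C: "0 < C" unfolding C_def by simp
  have fC: "f n \<le> C * (\<mu> + \<epsilon>) ^ n" for n
  proof -
    have "C0 * (\<mu> + \<epsilon>) ^ n \<le> C * (\<mu> + \<epsilon>) ^ n" unfolding C_def using mu e by (intro mult_right_mono) auto
    then show ?thesis using C0[of n] by simp
  qed
  have "(\<lambda>n. root n C * (\<mu> + \<epsilon>)) \<longlonglongrightarrow> 1 * (\<mu> + \<epsilon>)"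
    by (intro tendsto_mult_right LIMSEQ_root_const C)
  then have ev: "eventually (\<lambda>n. root n C * (\<mu> + \<epsilon>) < a) sequentially"
    using e by (intro order_tendstoD(2)) auto
  show "eventually (\<lambda>n. root n (f n) < a) sequentially"
    using ev eventually_ge_at_top[of 1]
  proof (rule eventually_elim2)
    fix n :: nat assume n: "root n C * (\<mu> + \<epsilon>) < a" "1 \<le> n"
    have "root n (f n) \<le> root n (C * (\<mu> + \<epsilon>) ^ n)" using n fC by simp
    also have "\<dots> = root n C * (\<mu> + \<epsilon>)"
      using n e mu by (simp add: real_root_mult real_root_power_cancel)
    finally show "root n (f n) < a" using n by simp
  qed
qed


definition lowb :: "'v set \<Rightarrow> ('v \<Rightarrow> 'v \<Rightarrow> bool) \<Rightarrow> real \<Rightarrow> 'v \<Rightarrow> bool" where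
  "lowb V E \<mu> v \<longleftrightarrow> (\<forall>\<delta>. 0 < \<delta> \<longrightarrow> \<delta> < \<mu> \<longrightarrow> (\<exists>c>0. \<forall>n. c * (\<mu> - \<delta>) ^ n \<le> sc V E v n))"

lemma cc_from:
  assumes mu: "1 \<le> \<mu>" and U: "unif_bound V E \<mu>" and L: "\<forall>v\<in>V. lowb V E \<mu> v"
  shows "has_connective_constant V E \<mu>"
  unfolding has_connective_constant_def
proof
  fix v assume v: "v \<in> V"
  have "(\<lambda>n. root n (sc V E v n)) \<longlonglongrightarrow> \<mu>"
  proof (rule root_lim)
    show "0 < \<mu>" using mu by simp
    show "\<forall>\<delta>. 0 < \<delta> \<longrightarrow> \<delta> < \<mu> \<longrightarrow> (\<exists>c>0. \<forall>n. c * (\<mu> - \<delta>) ^ n \<le> sc V E v n)"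
      using L v unfolding lowb_def by blast
    show "\<forall>\<epsilon>>0. \<exists>C. \<forall>n. sc V E v n \<le> C * (\<mu> + \<epsilon>) ^ n"
      using U v unfolding unif_bound_def by blast
  qed simp
  then show "(\<lambda>n. root n (real (sigma V E n v))) \<longlonglongrightarrow> \<mu>"
    unfolding sigma_def saws_eq_sw .
qed

lemma aut_card_le:
  assumes sg: "simple_graph V E" and lf: "locally_finite V E"
    and bij: "bij_betw \<alpha> V V" and hom: "\<forall>x\<in>V. \<forall>y\<in>V. E (\<alpha> x) (\<alpha> y) \<longleftrightarrow> E x y"
  shows "card (sw V E {} n v) \<le> card (sw V E {} n (\<alpha> v))"
proof -
  have inj: "inj_on \<alpha> V" using bij by (rule bij_betw_imp_inj_on)
  have sub: "map \<alpha> ` sw V E {} n v \<subseteq> sw V E {} n (\<alpha> v)"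
  proof
    fix ys assume "ys \<in> map \<alpha> ` sw V E {} n v"
    then obtain xs where xs: "xs \<in> sw V E {} n v" and ys: "ys = map \<alpha> xs" by auto
    have xsV: "set xs \<subseteq> V" and d: "distinct xs" and w: "iswalk E xs" and l: "length xs = Suc n"
      and h: "hd xs = v" using xs unfolding sw_def by auto
    have "set ys \<subseteq> V" using xsV bij ys unfolding bij_betw_def by auto
    moreover have "distinct ys" using d inj xsV ys by (simp add: distinct_map inj_on_subset)
    moreover have "iswalk E ys" unfolding ys iswalk_def
    proof (intro allI impI)
      fix i assume i: "Suc i < length (map \<alpha> xs)"
      have "E (xs ! i) (xs ! Suc i)" using w i unfolding iswalk_def by simp
      moreover have "xs ! i \<in> V" "xs ! Suc i \<in> V" using xsV i by (auto intro: nth_mem)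
      ultimately show "E (map \<alpha> xs ! i) (map \<alpha> xs ! Suc i)" using hom i by simp
    qed
    moreover have "hd ys = \<alpha> v" using l h ys by (cases xs) auto
    moreover have "length ys = Suc n" using l ys by simp
    ultimately show "ys \<in> sw V E {} n (\<alpha> v)" unfolding sw_def by blast
  qed
  have "inj_on (map \<alpha>) (sw V E {} n v)"
  proof (rule inj_onI)
    fix xs ys assume "xs \<in> sw V E {} n v" "ys \<in> sw V E {} n v" "map \<alpha> xs = map \<alpha> ys"
    moreover have "inj_on \<alpha> (set xs \<union> set ys)" using inj \<open>xs \<in> _\<close> \<open>ys \<in> _\<close>
      unfolding sw_def by (auto intro: inj_on_subset)
    ultimately show "xs = ys" using inj_on_map_eq_map by blast
  qed
  then have "card (map \<alpha> ` sw V E {} n v) = card (sw V E {} n v)" by (rule card_image)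
  then show ?thesis using card_mono[OF finite_sw[OF sg lf] sub] by simp
qed

lemma aut_card_eq:
  assumes sg: "simple_graph V E" and lf: "locally_finite V E"
    and bij: "bij_betw \<alpha> V V" and hom: "\<forall>x\<in>V. \<forall>y\<in>V. E (\<alpha> x) (\<alpha> y) \<longleftrightarrow> E x y"
    and v: "v \<in> V"
  shows "card (sw V E {} n (\<alpha> v)) = card (sw V E {} n v)"
proof -
  define \<beta> where "\<beta> = inv_into V \<alpha>"
  have bij2: "bij_betw \<beta> V V" unfolding \<beta>_def by (rule bij_betw_inv_into[OF bij])
  have img: "\<alpha> ` V = V" using bij by (simp add: bij_betw_def)
  have ab: "\<alpha> (\<beta> x) = x" if "x \<in> V" for x
    unfolding \<beta>_def using that img by (metis f_inv_into_f)
  have bV: "\<beta> x \<in> V" if "x \<in> V" for x using bij2 that by (meson bij_betwE)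
  have hom2: "\<forall>x\<in>V. \<forall>y\<in>V. E (\<beta> x) (\<beta> y) \<longleftrightarrow> E x y"
    using hom ab bV by metis
  have "\<beta> (\<alpha> v) = v" unfolding \<beta>_def using bij v by (simp add: bij_betw_imp_inj_on)
  then have "card (sw V E {} n (\<alpha> v)) \<le> card (sw V E {} n v)"
    using aut_card_le[OF sg lf bij2 hom2, of n "\<alpha> v"] by simp
  then show ?thesis using aut_card_le[OF sg lf bij hom, of n v] by simp
qed

lemma hammersley:
  assumes sg: "simple_graph V E" and inf: "infinite V" and con: "graph_connected V E"
    and lf: "locally_finite V E" and qt: "coloured_quasi_transitive V E chi"
  shows "\<exists>\<mu>. 1 \<le> \<mu> \<and> unif_bound V E \<mu> \<and> (\<forall>v\<in>V. lowb V E \<mu> v)"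
proof -
  obtain W where W: "finite W" "W \<subseteq> V" and Wa: "\<And>v. v \<in> V \<Longrightarrow> \<exists>\<alpha>. coloured_automorphism V E chi \<alpha> \<and> \<alpha> v \<in> W"
    using qt unfolding coloured_quasi_transitive_def by blast
  obtain v0 where v0: "v0 \<in> V" using inf by (metis ex_in_conv finite.emptyI)
  have Wne: "W \<noteq> {}" using Wa[OF v0] by auto
  define M where "M n = Max ((\<lambda>w. card (sw V E {} n w)) ` W)" for n
  have leM: "card (sw V E {} n v) \<le> M n" for n v
  proof (cases "v \<in> V")
    case True
    obtain \<alpha> where \<alpha>: "coloured_automorphism V E chi \<alpha>" "\<alpha> v \<in> W" using Wa[OF True] by blast
    have "card (sw V E {} n v) = card (sw V E {} n (\<alpha> v))"
      using aut_card_eq[OF sg lf _ _ True, of \<alpha> n] \<alpha>(1) unfolding coloured_automorphism_def by simp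
    also have "\<dots> \<le> M n" unfolding M_def using W \<alpha>(2) by (intro Max_ge) auto
    finally show ?thesis .
  next
    case False then show ?thesis by (simp add: sw_empty)
  qed
  have Min: "\<exists>w\<in>W. M n = card (sw V E {} n w)" for n
    unfolding M_def using W Wne by (metis (no_types, lifting) Max_in finite_imageI image_iff image_is_empty)
  have M1: "1 \<le> M n" for n
  proof -
    obtain w where w: "w \<in> W" using Wne by auto
    have "sw V E {} n w \<noteq> {}" using saw_exists[OF sg lf inf con] w W by auto
    then have "1 \<le> card (sw V E {} n w)" using finite_sw[OF sg lf] by (simp add: Suc_le_eq card_gt_0_iff)
    then show ?thesis using leM[of n w] by simp
  qed
  have Msub: "real (M (m + n)) \<le> real (M m) * real (M n)" for m n
  proof -
    obtain w where w: "w \<in> W" "M (m + n) = card (sw V E {} (m + n) w)" using Min by blast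
    have "real (card (sw V E {} (m + n) w)) \<le> real (card (sw V E {} m w)) * real (M n)"
      by (rule sw_submult[OF sg lf]) (simp add: leM)
    also have "\<dots> \<le> real (M m) * real (M n)" using leM[of m w] by (intro mult_right_mono) auto
    finally show ?thesis using w by simp
  qed
  define a where "a n = real (M n)" for n
  define \<mu> where "\<mu> = (INF n\<in>{1..}. root n (a n))"
  have a1: "\<And>n. 1 \<le> a n" unfolding a_def using M1 by simp
  have asub: "\<And>m n. a (m + n) \<le> a m * a n" unfolding a_def using Msub by simp
  note F = fekete_like[OF a1 asub, folded \<mu>_def]
  have U: "unif_bound V E \<mu>" unfolding unif_bound_def
  proof (intro allI impI)
    fix \<epsilon> :: real assume "0 < \<epsilon>"
    then obtain C where C: "\<forall>n. a n \<le> C * (\<mu> + \<epsilon>) ^ n" using F(3) by blast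
    show "\<exists>C. \<forall>u\<in>V. \<forall>j. sc V E u j \<le> C * (\<mu> + \<epsilon>) ^ j"
    proof (intro exI[of _ C] ballI allI)
      fix u j
      have "sc V E u j \<le> a j" unfolding a_def using leM[of j u] by simp
      then show "sc V E u j \<le> C * (\<mu> + \<epsilon>) ^ j" using C by (meson order_trans)
    qed
  qed
  have L: "lowb V E \<mu> v" if v: "v \<in> V" for v
  proof -
    have "\<forall>w\<in>W. \<exists>k. (E ^^ k) w v"
      using con v W unfolding graph_connected_def by (auto simp: rtranclp_power)
    then obtain kf where kf: "\<And>w. w \<in> W \<Longrightarrow> (E ^^ kf w) w v" by metis
    define R where "R = (\<Sum>w\<in>W. kf w)"
    have kR: "kf w \<le> R" if "w \<in> W" for w unfolding R_def using W(1) that by (intro member_le_sum) auto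
    have "nearQ V E \<mu> v R" unfolding nearQ_def
    proof (intro allI impI exI[of _ 1] conjI)
      fix \<delta> :: real and n :: nat assume d: "0 < \<delta>" "\<delta> < \<mu>"
      obtain w where w: "w \<in> W" "M n = card (sw V E {} n w)" using Min by blast
      have "(\<mu> - \<delta>) ^ n \<le> \<mu> ^ n" using d by (intro power_mono) auto
      also have "\<dots> \<le> a n" by (rule F(2))
      finally have "1 * (\<mu> - \<delta>) ^ n \<le> sc V E w n" using w unfolding a_def by simp
      then show "\<exists>y\<in>V. (\<exists>k\<le>R. (E ^^ k) y v) \<and> 1 * (\<mu> - \<delta>) ^ n \<le> sc V E y n"
        using w W kf kR by blast
    qed simp
    then show ?thesis unfolding lowb_def using nearQ_lower[OF sg lf F(1) U] by blast
  qed
  show ?thesis using F(1) U L by blast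
qed


definition PP :: "'c set \<Rightarrow> ('c \<Rightarrow> 'c \<Rightarrow> bool) \<Rightarrow> (nat \<Rightarrow> 'c) \<Rightarrow> nat \<Rightarrow> nat \<Rightarrow> 'c list set" where
  "PP Vg Eg p i j = {xs. xs \<noteq> [] \<and> hd xs = p i \<and> last xs = p j \<and> set xs \<subseteq> Vg \<and> distinct xs \<and> iswalk Eg xs}"

definition DL :: "'c set \<Rightarrow> 'c list set" where
  "DL Vg = {xs. set xs \<subseteq> Vg \<and> distinct xs}"

lemma gadget_paths_PP: "gadget_paths Vg Eg p = PP Vg Eg p 0 1"
  unfolding gadget_paths_def PP_def iswalk_def by auto

lemma finite_DL: "finite Vg \<Longrightarrow> finite (DL Vg)"
proof -
  assume f: "finite Vg"
  have "DL Vg \<subseteq> {xs. set xs \<subseteq> Vg \<and> length xs \<le> card Vg}"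
    unfolding DL_def using f by (auto simp: distinct_card[symmetric] intro: card_mono)
  moreover have "finite {xs. set xs \<subseteq> Vg \<and> length xs \<le> card Vg}" by (rule finite_lists_length_le[OF f])
  ultimately show ?thesis by (rule finite_subset)
qed

lemma DL_length: "xs \<in> DL Vg \<Longrightarrow> finite Vg \<Longrightarrow> length xs \<le> card Vg"
  unfolding DL_def by (auto simp: distinct_card[symmetric] intro: card_mono)

lemma PP_DL: "PP Vg Eg p i j \<subseteq> DL Vg" unfolding PP_def DL_def by auto

lemma finite_PP: "finite Vg \<Longrightarrow> finite (PP Vg Eg p i j)"
  using finite_DL PP_DL finite_subset by metis

lemma PP_len2: "xs \<in> PP Vg Eg p i j \<Longrightarrow> p i \<noteq> p j \<Longrightarrow> 2 \<le> length xs"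
  unfolding PP_def by (cases xs) (auto split: if_splits simp: Suc_le_eq)

lemma sum_PP_le:
  fixes f :: "nat \<Rightarrow> real"
  assumes fin: "finite Vg" and nn: "\<And>k. 0 \<le> f k"
    and bij: "bij_betw \<sigma> Vg Vg" and hom: "\<forall>x\<in>Vg. \<forall>y\<in>Vg. Eg (\<sigma> x) (\<sigma> y) \<longleftrightarrow> Eg x y"
    and pi: "\<sigma> (p i) = p i'" and pj: "\<sigma> (p j) = p j'"
  shows "(\<Sum>xs\<in>PP Vg Eg p i j. f (length xs)) \<le> (\<Sum>xs\<in>PP Vg Eg p i' j'. f (length xs))"
proof -
  have inj: "inj_on \<sigma> Vg" using bij by (rule bij_betw_imp_inj_on)
  have sub: "map \<sigma> ` PP Vg Eg p i j \<subseteq> PP Vg Eg p i' j'"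
  proof
    fix ys assume "ys \<in> map \<sigma> ` PP Vg Eg p i j"
    then obtain xs where xs: "xs \<in> PP Vg Eg p i j" and ys: "ys = map \<sigma> xs" by auto
    have ne: "xs \<noteq> []" and xsV: "set xs \<subseteq> Vg" and d: "distinct xs" and w: "iswalk Eg xs"
      and h: "hd xs = p i" and l: "last xs = p j" using xs unfolding PP_def by auto
    have "set ys \<subseteq> Vg" using xsV bij ys unfolding bij_betw_def by auto
    moreover have "distinct ys" using d inj xsV ys by (simp add: distinct_map inj_on_subset)
    moreover have "iswalk Eg ys" unfolding ys iswalk_def
    proof (intro allI impI)
      fix k assume k: "Suc k < length (map \<sigma> xs)"
      have "Eg (xs ! k) (xs ! Suc k)" using w k unfolding iswalk_def by simp
      moreover have "xs ! k \<in> Vg" "xs ! Suc k \<in> Vg" using xsV k by (auto intro: nth_mem)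
      ultimately show "Eg (map \<sigma> xs ! k) (map \<sigma> xs ! Suc k)" using hom k by simp
    qed
    moreover have "hd ys = p i'" using ne h ys pi by (simp add: hd_map)
    moreover have "last ys = p j'" using ne l ys pj by (simp add: last_map)
    moreover have "ys \<noteq> []" using ne ys by simp
    ultimately show "ys \<in> PP Vg Eg p i' j'" unfolding PP_def by blast
  qed
  have injm: "inj_on (map \<sigma>) (PP Vg Eg p i j)"
  proof (rule inj_onI)
    fix xs ys assume a: "xs \<in> PP Vg Eg p i j" "ys \<in> PP Vg Eg p i j" "map \<sigma> xs = map \<sigma> ys"
    have "inj_on \<sigma> (set xs \<union> set ys)" using inj a(1,2) unfolding PP_def by (auto intro: inj_on_subset)
    then show "xs = ys" using a(3) inj_on_map_eq_map by blast
  qed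
  have "(\<Sum>xs\<in>PP Vg Eg p i j. f (length xs)) = (\<Sum>ys\<in>map \<sigma> ` PP Vg Eg p i j. f (length ys))"
    by (subst sum.reindex[OF injm]) simp
  also have "\<dots> \<le> (\<Sum>xs\<in>PP Vg Eg p i' j'. f (length xs))"
    by (rule sum_mono2[OF finite_PP[OF fin] sub]) (simp add: nn)
  finally show ?thesis .
qed

lemma sum_PP_rev:
  fixes f :: "nat \<Rightarrow> real"
  assumes fin: "finite Vg" and nn: "\<And>k. 0 \<le> f k" and sym: "\<And>x y. Eg x y \<Longrightarrow> Eg y x"
  shows "(\<Sum>xs\<in>PP Vg Eg p i j. f (length xs)) \<le> (\<Sum>xs\<in>PP Vg Eg p j i. f (length xs))"
proof -
  have sub: "rev ` PP Vg Eg p i j \<subseteq> PP Vg Eg p j i"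
    unfolding PP_def by (auto simp: hd_rev last_rev iswalk_rev[OF sym])
  have "(\<Sum>xs\<in>PP Vg Eg p i j. f (length xs)) = (\<Sum>ys\<in>rev ` PP Vg Eg p i j. f (length ys))"
    by (subst sum.reindex) (auto intro: inj_onI)
  also have "\<dots> \<le> (\<Sum>xs\<in>PP Vg Eg p j i. f (length xs))"
    by (rule sum_mono2[OF finite_PP[OF fin] sub]) (simp add: nn)
  finally show ?thesis .
qed

lemma lt_cycle:
  assumes lt: "local_transformation Vg Eg p"
  shows "\<exists>c. gadget_automorphism Vg Eg c \<and>
     ((c (p 0) = p 1 \<and> c (p 1) = p 2 \<and> c (p 2) = p 0) \<or> (c (p 0) = p 2 \<and> c (p 2) = p 1 \<and> c (p 1) = p 0))"
proof -
  obtain H where H: "\<forall>\<sigma>\<in>H. gadget_automorphism Vg Eg \<sigma> \<and> \<sigma> ` (p ` {0,1,2}) = p ` {0,1,2}"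
    "\<forall>\<sigma>\<in>H. \<forall>\<tau>\<in>H. \<sigma> \<circ> \<tau> \<in> H" "\<forall>i\<in>{0,1,2}. \<forall>j\<in>{0,1,2}. \<exists>\<sigma>\<in>H. \<sigma> (p i) = p j"
    using lt unfolding local_transformation_def by blast
  have inj: "inj_on p {0,1,2}" and pV: "p ` {0,1,2} \<subseteq> Vg" using lt unfolding local_transformation_def by auto
  have d: "p a \<noteq> p b" if "a \<in> {0,1,2}" "b \<in> {0,1,2}" "a \<noteq> b" for a b
    using inj_onD[OF inj _ that(1,2)] that(3) by blast
  have d01: "p 0 \<noteq> p 1" by (rule d) auto
  have d02: "p 0 \<noteq> p 2" by (rule d) auto
  have d12: "p 1 \<noteq> p 2" by (rule d) auto
  have vals: "\<sigma> (p k) \<in> {p 0, p 1, p 2}" if "\<sigma> \<in> H" "k \<in> {0,1,2}" for \<sigma> k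
    using H(1) that by blast
  have injs: "\<sigma> (p a) \<noteq> \<sigma> (p b)" if "\<sigma> \<in> H" "a \<in> {0,1,2}" "b \<in> {0,1,2}" "p a \<noteq> p b" for \<sigma> a b
  proof -
    have "inj_on \<sigma> Vg" using H(1) that(1) unfolding gadget_automorphism_def by (auto dest: bij_betw_imp_inj_on)
    moreover have "p a \<in> Vg" "p b \<in> Vg" using pV that by auto
    ultimately show ?thesis using that(4) by (auto dest: inj_onD)
  qed
  obtain t1 where t1: "t1 \<in> H" "t1 (p 0) = p 1" using H(3) by fastforce
  have t1a: "t1 (p 1) \<in> {p 0, p 2}" using vals[OF t1(1), of 1] injs[OF t1(1), of 0 1] t1(2) d01 by auto
  have t1b: "t1 (p 2) \<in> {p 0, p 1, p 2}" using vals[OF t1(1), of 2] by auto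
  show ?thesis
  proof (cases "t1 (p 1) = p 2")
    case True
    then have "t1 (p 2) = p 0" using t1b injs[OF t1(1), of 2 0] injs[OF t1(1), of 2 1] t1(2) d02 d12 by auto
    then show ?thesis using True t1 H(1) by blast
  next
    case False
    then have t11: "t1 (p 1) = p 0" using t1a by auto
    then have t12: "t1 (p 2) = p 2" using t1b injs[OF t1(1), of 2 0] injs[OF t1(1), of 2 1] t1(2) d02 d12 by auto
    obtain t2 where t2: "t2 \<in> H" "t2 (p 0) = p 2" using H(3) by fastforce
    have t2a: "t2 (p 2) \<in> {p 0, p 1}" using vals[OF t2(1), of 2] injs[OF t2(1), of 0 2] t2(2) d02 by auto
    have t2b: "t2 (p 1) \<in> {p 0, p 1, p 2}" using vals[OF t2(1), of 1] by auto
    show ?thesis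
    proof (cases "t2 (p 2) = p 1")
      case True
      then have "t2 (p 1) = p 0" using t2b injs[OF t2(1), of 1 0] injs[OF t2(1), of 1 2] t2(2) d01 d12 by auto
      then show ?thesis using True t2 H(1) by blast
    next
      case False
      then have t22: "t2 (p 2) = p 0" using t2a by auto
      then have t21: "t2 (p 1) = p 1" using t2b injs[OF t2(1), of 1 0] injs[OF t2(1), of 1 2] t2(2) d01 d12 by auto
      have c: "t1 \<circ> t2 \<in> H" using H(2) t1(1) t2(1) by blast
      have "(t1 \<circ> t2) (p 0) = p 2" "(t1 \<circ> t2) (p 2) = p 1" "(t1 \<circ> t2) (p 1) = p 0"
        using t2(2) t22 t21 t1(2) t11 t12 by auto
      then show ?thesis using c H(1) by blast
    qed
  qed
qed

lemma sum_PP_eq: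
  fixes f :: "nat \<Rightarrow> real"
  assumes lt: "local_transformation Vg Eg p" and nn: "\<And>k. 0 \<le> f k"
    and ij: "i \<in> {0,1,2}" "j \<in> {0,1,2}" "i \<noteq> j"
  shows "(\<Sum>xs\<in>PP Vg Eg p i j. f (length xs)) = (\<Sum>xs\<in>PP Vg Eg p 0 1. f (length xs))"
proof -
  have fin: "finite Vg" and sg: "simple_graph Vg Eg" using lt unfolding local_transformation_def by auto
  have sym: "\<And>x y. Eg x y \<Longrightarrow> Eg y x" using sg_sym[OF sg] .
  define S where "S a b = (\<Sum>xs\<in>PP Vg Eg p a b. f (length xs))" for a b
  have R: "S a b \<le> S b a" for a b unfolding S_def by (rule sum_PP_rev[OF fin nn sym])
  obtain c where c: "gadget_automorphism Vg Eg c"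
     "(c (p 0) = p 1 \<and> c (p 1) = p 2 \<and> c (p 2) = p 0) \<or> (c (p 0) = p 2 \<and> c (p 2) = p 1 \<and> c (p 1) = p 0)"
    using lt_cycle[OF lt] by blast
  have cb: "bij_betw c Vg Vg" and ch: "\<forall>x\<in>Vg. \<forall>y\<in>Vg. Eg (c x) (c y) \<longleftrightarrow> Eg x y"
    using c(1) unfolding gadget_automorphism_def by auto
  note A = sum_PP_le[OF fin nn cb ch]
  have eqs: "S 0 1 = S 1 2 \<and> S 1 2 = S 2 0"
    using c(2)
  proof
    assume cc: "c (p 0) = p 1 \<and> c (p 1) = p 2 \<and> c (p 2) = p 0"
    have "S 0 1 \<le> S 1 2" "S 1 2 \<le> S 2 0" "S 2 0 \<le> S 0 1" unfolding S_def using cc by (auto intro!: A)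
    then show ?thesis by linarith
  next
    assume cc: "c (p 0) = p 2 \<and> c (p 2) = p 1 \<and> c (p 1) = p 0"
    have "S 0 1 \<le> S 2 0" "S 2 0 \<le> S 1 2" "S 1 2 \<le> S 0 1" unfolding S_def using cc by (auto intro!: A)
    then show ?thesis by linarith
  qed
  have r: "S 1 0 = S 0 1" "S 2 1 = S 1 2" "S 0 2 = S 2 0" using R by (meson order_antisym)+
  have "S i j = S 0 1" using ij eqs r by auto
  then show ?thesis unfolding S_def .
qed

lemma GP_nonempty:
  assumes lt: "local_transformation Vg Eg p"
  shows "PP Vg Eg p 0 1 \<noteq> {}"
proof -
  have sg: "simple_graph Vg Eg" and con: "graph_connected Vg Eg" and pV: "p ` {0,1,2} \<subseteq> Vg"
    using lt unfolding local_transformation_def by auto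
  have "Eg\<^sup>*\<^sup>* (p 0) (p 1)" using con pV unfolding graph_connected_def by auto
  then obtain xs where xs: "xs \<noteq> []" "hd xs = p 0" "last xs = p 1" "distinct xs" "iswalk Eg xs"
    using path_exists by metis
  have "set xs \<subseteq> Vg" using iswalk_set[OF sg xs(5,1)] xs(2) pV by auto
  then have "xs \<in> PP Vg Eg p 0 1" using xs unfolding PP_def by auto
  then show ?thesis by blast
qed


primrec Acnt :: "'c list set \<Rightarrow> nat \<Rightarrow> nat \<Rightarrow> real" where
  "Acnt P 0 n = (if n = 0 then 1 else 0)"
| "Acnt P (Suc m) n = (\<Sum>xs\<in>P. if length xs + 1 \<le> n then Acnt P m (n - (length xs + 1)) else 0)"

lemma Acnt_nn: "0 \<le> Acnt P m n"
  by (induction m arbitrary: n) (auto intro!: sum_nonneg)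

lemma shift_sum:
  fixes g :: "nat \<Rightarrow> real"
  assumes "l \<le> N"
  shows "(\<Sum>n\<le>N. if l \<le> n then g (n - l) * x ^ n else 0) = x ^ l * (\<Sum>n\<le>N - l. g n * x ^ n)"
proof -
  have "(\<Sum>n\<le>N. if l \<le> n then g (n - l) * x ^ n else 0) = (\<Sum>n\<in>{l..N}. g (n - l) * x ^ n)"
  proof -
    have "(\<Sum>n\<le>N. if l \<le> n then g (n - l) * x ^ n else 0) =
        (\<Sum>n\<in>{..N} \<inter> {n. l \<le> n}. g (n - l) * x ^ n) + (\<Sum>n\<in>{..N} \<inter> - {n. l \<le> n}. 0)"
      by (rule sum.If_cases) simp
    moreover have "{..N} \<inter> {n. l \<le> n} = {l..N}" by auto
    ultimately show ?thesis by simp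
  qed
  also have "{l..N} = {0 + l..(N - l) + l}" using assms by simp
  also have "(\<Sum>n\<in>{0 + l..(N - l) + l}. g (n - l) * x ^ n) = (\<Sum>n\<in>{0..N - l}. g n * x ^ (n + l))"
    by (subst sum.shift_bounds_cl_nat_ivl) simp
  also have "\<dots> = x ^ l * (\<Sum>n\<le>N - l. g n * x ^ n)"
    by (simp add: sum_distrib_left power_add atLeast0AtMost algebra_simps)
  finally show ?thesis .
qed

lemma Acnt_gf:
  assumes fin: "finite P" and L: "\<forall>xs\<in>P. length xs + 1 \<le> L"
  shows "m * L \<le> N \<Longrightarrow> (\<Sum>n\<le>N. Acnt P m n * x ^ n) = (\<Sum>xs\<in>P. x ^ (length xs + 1)) ^ m"
proof (induction m arbitrary: N)
  case 0
  have "(\<Sum>n\<le>N. Acnt P 0 n * x ^ n) = (\<Sum>n\<le>N. if n = 0 then 1 else 0)"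
    by (intro sum.cong) auto
  also have "\<dots> = 1" by (simp add: sum.delta)
  finally show ?case by simp
next
  case (Suc m)
  have "(\<Sum>n\<le>N. Acnt P (Suc m) n * x ^ n) =
      (\<Sum>n\<le>N. \<Sum>xs\<in>P. if length xs + 1 \<le> n then Acnt P m (n - (length xs + 1)) * x ^ n else 0)"
    unfolding Acnt.simps sum_distrib_right by (intro sum.cong refl) simp
  also have "\<dots> = (\<Sum>xs\<in>P. \<Sum>n\<le>N. if length xs + 1 \<le> n then Acnt P m (n - (length xs + 1)) * x ^ n else 0)"
    by (rule sum.swap)
  also have "\<dots> = (\<Sum>xs\<in>P. x ^ (length xs + 1) * (\<Sum>xs\<in>P. x ^ (length xs + 1)) ^ m)"
  proof (rule sum.cong[OF refl])
    fix xs assume xs: "xs \<in> P"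
    have l: "length xs + 1 \<le> L" using L xs by auto
    have SL: "Suc m * L = L + m * L" by simp
    have le: "length xs + 1 \<le> N" using Suc.prems l SL by linarith
    have mN: "m * L \<le> N - (length xs + 1)" using Suc.prems l SL by linarith
    show "(\<Sum>n\<le>N. if length xs + 1 \<le> n then Acnt P m (n - (length xs + 1)) * x ^ n else 0) =
        x ^ (length xs + 1) * (\<Sum>xs\<in>P. x ^ (length xs + 1)) ^ m"
      using shift_sum[OF le, of "Acnt P m" x] Suc.IH[OF mN] by simp
  qed
  also have "\<dots> = (\<Sum>xs\<in>P. x ^ (length xs + 1)) ^ Suc m" by (simp add: sum_distrib_right)
  finally show ?case .
qed

lemma Acnt_super:
  assumes fin: "finite P"
  shows "Acnt P m1 n1 * Acnt P m2 n2 \<le> Acnt P (m1 + m2) (n1 + n2)"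
proof (induction m1 arbitrary: n1)
  case 0 then show ?case by (simp add: Acnt_nn)
next
  case (Suc m1)
  have "Acnt P (Suc m1) n1 * Acnt P m2 n2 =
      (\<Sum>xs\<in>P. (if length xs + 1 \<le> n1 then Acnt P m1 (n1 - (length xs + 1)) else 0) * Acnt P m2 n2)"
    by (simp add: sum_distrib_right)
  also have "\<dots> \<le> (\<Sum>xs\<in>P. if length xs + 1 \<le> n1 + n2 then Acnt P (m1 + m2) (n1 + n2 - (length xs + 1)) else 0)"
  proof (rule sum_mono)
    fix xs assume "xs \<in> P"
    show "(if length xs + 1 \<le> n1 then Acnt P m1 (n1 - (length xs + 1)) else 0) * Acnt P m2 n2
        \<le> (if length xs + 1 \<le> n1 + n2 then Acnt P (m1 + m2) (n1 + n2 - (length xs + 1)) else 0)"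
    proof (cases "length xs + 1 \<le> n1")
      case True
      have "n1 + n2 - (length xs + 1) = (n1 - (length xs + 1)) + n2" using True by simp
      then show ?thesis using True Suc.IH[of "n1 - (length xs + 1)"] by simp
    next
      case False then show ?thesis by (simp add: Acnt_nn)
    qed
  qed
  also have "\<dots> = Acnt P (Suc m1 + m2) (n1 + n2)" by simp
  finally show ?case .
qed

lemma Acnt_pow:
  assumes fin: "finite P"
  shows "Acnt P m n ^ k \<le> Acnt P (k * m) (k * n)"
proof (induction k)
  case 0 then show ?case by simp
next
  case (Suc k)
  have "Acnt P m n ^ Suc k = Acnt P m n * Acnt P m n ^ k" by simp
  also have "\<dots> \<le> Acnt P m n * Acnt P (k * m) (k * n)"
    using Suc.IH Acnt_nn by (intro mult_left_mono) auto
  also have "\<dots> \<le> Acnt P (m + k * m) (n + k * n)" by (rule Acnt_super[OF fin])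
  finally show ?case by simp
qed

lemma Acnt_zero:
  assumes L3: "\<forall>xs\<in>P. 3 \<le> length xs + 1"
  shows "n < 3 * m \<Longrightarrow> Acnt P m n = 0"
proof (induction m arbitrary: n)
  case 0 then show ?case by simp
next
  case (Suc m)
  have "\<And>xs. xs \<in> P \<Longrightarrow> (if length xs + 1 \<le> n then Acnt P m (n - (length xs + 1)) else 0) = 0"
  proof -
    fix xs assume xs: "xs \<in> P"
    have "3 \<le> length xs + 1" using L3 xs by auto
    then show "(if length xs + 1 \<le> n then Acnt P m (n - (length xs + 1)) else 0) = 0"
      using Suc.IH[of "n - (length xs + 1)"] Suc.prems by auto
  qed
  then show ?case by simp
qed

definition hP :: "'c list set \<Rightarrow> real \<Rightarrow> real" where
  "hP P x = (\<Sum>xs\<in>P. x ^ (length xs + 1))"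

lemma xc_exists:
  assumes fin: "finite P" and ne: "P \<noteq> {}" and y: "0 < y" "y \<le> real (card P)"
  shows "\<exists>xc. 0 < xc \<and> xc \<le> 1 \<and> hP P xc = y \<and> (\<forall>x. 0 \<le> x \<longrightarrow> x < xc \<longrightarrow> hP P x < y)"
proof -
  have c: "continuous_on {0..1} (hP P)" unfolding hP_def by (intro continuous_intros)
  have h0: "hP P 0 = 0" unfolding hP_def by simp
  have h1: "hP P 1 = real (card P)" unfolding hP_def by simp
  have "\<exists>x. 0 \<le> x \<and> x \<le> 1 \<and> hP P x = y"
    by (rule IVT'[OF _ _ _ c]) (use h0 h1 y in simp_all)
  then obtain xc where xc: "0 \<le> xc" "xc \<le> 1" "hP P xc = y" by blast
  have xc0: "0 < xc" using xc h0 y by (cases "xc = 0") auto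
  have mono: "hP P x < y" if x: "0 \<le> x" "x < xc" for x
  proof -
    have "hP P x < hP P xc" unfolding hP_def
      by (rule sum_strict_mono[OF fin ne]) (rule power_strict_mono[OF x(2) x(1)], simp)
    then show ?thesis using xc by simp
  qed
  show ?thesis using xc xc0 mono by blast
qed

lemma hP_mono:
  assumes fin: "finite P" and x: "0 \<le> x" "x \<le> y"
  shows "hP P x \<le> hP P y"
  unfolding hP_def by (rule sum_mono) (rule power_mono[OF x(2) x(1)])


locale setting =
  fixes V :: "'a set" and E :: "'a \<Rightarrow> 'a \<Rightarrow> bool" and chi :: "'a \<Rightarrow> bool"
    and Vg :: "'c set" and Eg :: "'c \<Rightarrow> 'c \<Rightarrow> bool" and p :: "nat \<Rightarrow> 'c"
    and att :: "'a \<Rightarrow> 'a \<Rightarrow> nat"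
  assumes sg: "simple_graph V E" and lf: "locally_finite V E"
    and bip: "bipartite_colouring V E chi"
    and deg3: "\<forall>v\<in>V. chi v \<longrightarrow> card (nbrs E v) = 3"
    and lt: "local_transformation Vg Eg p"
    and attb: "\<forall>b\<in>V. chi b \<longrightarrow> bij_betw (att b) (nbrs E b) {0,1,2}"
begin

abbreviation "TV \<equiv> tilde_V V chi Vg"
abbreviation "TE \<equiv> tilde_E V E chi Eg p att"
abbreviation "Ib b \<equiv> (\<lambda>z::'c. (Inr (b, z) :: 'a + 'a \<times> 'c))"

lemma finVg: "finite Vg" and sgg: "simple_graph Vg Eg"
  using lt unfolding local_transformation_def by auto

lemma pV: "i \<in> {0,1,2} \<Longrightarrow> p i \<in> Vg"
  using lt unfolding local_transformation_def by auto

lemma pinj: "i \<in> {0,1,2} \<Longrightarrow> j \<in> {0,1,2} \<Longrightarrow> p i = p j \<Longrightarrow> i = j"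
  using lt unfolding local_transformation_def by (auto dest: inj_onD)

lemma att_in: assumes "b \<in> V" "chi b" "E b w" shows "att b w \<in> {0,1,2}"
proof -
  have "w \<in> nbrs E b" using assms(3) by (simp add: nbrs_def)
  then have "att b w \<in> att b ` nbrs E b" by blast
  then show ?thesis using attb assms(1,2) unfolding bij_betw_def by blast
qed

lemma att_port: "b \<in> V \<Longrightarrow> chi b \<Longrightarrow> E b w \<Longrightarrow> p (att b w) \<in> Vg"
  using att_in pV by blast

lemma att_inj: "b \<in> V \<Longrightarrow> chi b \<Longrightarrow> E b w \<Longrightarrow> E b w' \<Longrightarrow> w \<noteq> w' \<Longrightarrow> att b w \<noteq> att b w'"
  using attb unfolding bij_betw_def inj_on_def nbrs_def by auto

lemma port_inj: "b \<in> V \<Longrightarrow> chi b \<Longrightarrow> E b w \<Longrightarrow> E b w' \<Longrightarrow> p (att b w) = p (att b w') \<Longrightarrow> w = w'"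
  using att_inj att_in pinj by metis

lemma bip_E: "E x y \<Longrightarrow> chi x \<noteq> chi y"
  using bip unfolding bipartite_colouring_def by blast

lemma TV_Inl[simp]: "Inl w \<in> TV \<longleftrightarrow> w \<in> V \<and> \<not> chi w"
  unfolding tilde_V_def by auto
lemma TV_Inr[simp]: "Inr (b, x) \<in> TV \<longleftrightarrow> b \<in> V \<and> chi b \<and> x \<in> Vg"
  unfolding tilde_V_def by auto

lemma sgT: "simple_graph TV TE"
proof -
  have 1: "x \<in> TV \<and> y \<in> TV" if "TE x y" for x y
    using that att_port sg_edge[OF sgg] by (cases x; cases y) auto
  have 2: "TE y x" if "TE x y" for x y
    using that sg_sym[OF sgg] by (cases x; cases y) auto
  have 3: "\<not> TE x x" for x using sg_irrefl[OF sgg] by (cases x) auto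
  show ?thesis unfolding simple_graph_def using 1 2 3 by blast
qed

lemma nbrs_Inl: "nbrs TE (Inl w) \<subseteq> (\<lambda>b. Inr (b, p (att b w))) ` nbrs E w"
proof
  fix u assume "u \<in> nbrs TE (Inl w)"
  then have u: "TE (Inl w) u" unfolding nbrs_def by simp
  then show "u \<in> (\<lambda>b. Inr (b, p (att b w))) ` nbrs E w"
    using sg_sym[OF sg] unfolding nbrs_def by (cases u) auto
qed

lemma nbrs_Inr: "nbrs TE (Inr (b, y)) \<subseteq> Ib b ` Vg \<union> Inl ` nbrs E b"
proof
  fix u assume "u \<in> nbrs TE (Inr (b, y))"
  then have u: "TE (Inr (b, y)) u" unfolding nbrs_def by simp
  then show "u \<in> Ib b ` Vg \<union> Inl ` nbrs E b"
    using sg_edge[OF sgg] unfolding nbrs_def by (cases u) auto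
qed

lemma lfT: "locally_finite TV TE"
  unfolding locally_finite_def
proof
  fix v assume v: "v \<in> TV"
  show "finite (nbrs TE v)"
  proof (cases v)
    case (Inl w)
    then have "finite (nbrs E w)" using lf v unfolding locally_finite_def by auto
    then show ?thesis using Inl nbrs_Inl finite_subset by blast
  next
    case (Inr bx)
    then obtain b x where bx: "v = Inr (b, x)" by (cases bx) auto
    then have "finite (nbrs E b)" using lf v unfolding locally_finite_def by auto
    then show ?thesis using bx nbrs_Inr[of b x] finVg finite_subset by blast
  qed
qed

lemma first_step:
  assumes "\<pi> \<in> sw TV TE A (Suc n) (Inl w)"
  shows "\<exists>b \<pi>'. E b w \<and> \<pi> = Inl w # \<pi>' \<and> \<pi>' \<in> sw TV TE (insert (Inl w) A) n (Inr (b, p (att b w)))"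
proof -
  have w: "Inl w \<in> TV" "Inl w \<notin> A"
    using assms sw_empty[of "Inl w" TV A TE "Suc n"] by blast+
  from assms obtain u where u: "u \<in> nbrs TE (Inl w)" and pi: "\<pi> \<in> (#) (Inl w) ` sw TV TE (insert (Inl w) A) n u"
    using sw_Suc[OF sgT w] by blast
  obtain b where b: "E w b" "u = Inr (b, p (att b w))" using nbrs_Inl u unfolding nbrs_def by blast
  show ?thesis using pi b sg_sym[OF sg b(1)] by blast
qed

lemma split_gadget:
  assumes "\<pi> \<in> sw TV TE A n (Inr (b, y))"
  shows "\<exists>seg rest. \<pi> = map (Ib b) seg @ rest \<and> seg \<noteq> [] \<and> hd seg = y \<and> distinct seg \<and>
     set seg \<subseteq> Vg \<and> iswalk Eg seg \<and> length seg \<le> Suc n \<and>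
     (rest = [] \<longrightarrow> length seg = Suc n) \<and>
     (rest \<noteq> [] \<longrightarrow> (\<exists>w'. E b w' \<and> w' \<in> V \<and> \<not> chi w' \<and> last seg = p (att b w') \<and> length seg \<le> n \<and>
        rest \<in> sw TV TE (A \<union> Ib b ` set seg) (n - length seg) (Inl w')))"
  using assms
proof (induction n arbitrary: \<pi> y A)
  case 0
  then have "\<pi> = [Inr (b, y)]" "y \<in> Vg" by (auto simp: sw_0 split: if_splits)
  then show ?case by (intro exI[of _ "[y]"] exI[of _ "[]"]) auto
next
  case (Suc n)
  have v: "Inr (b, y) \<in> TV" "Inr (b, y) \<notin> A"
    using Suc.prems sw_empty[of "Inr (b, y)" TV A TE "Suc n"] by blast+
  then have bV: "b \<in> V" "chi b" "y \<in> Vg" by auto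
  from Suc.prems obtain u \<pi>' where u: "TE (Inr (b, y)) u" and pi: "\<pi> = Inr (b, y) # \<pi>'"
    and pi': "\<pi>' \<in> sw TV TE (insert (Inr (b, y)) A) n u"
    using sw_Suc[OF sgT v] unfolding nbrs_def by blast
  show ?case
  proof (cases u)
    case (Inl w')
    have w': "E b w'" "w' \<in> V" "\<not> chi w'" "y = p (att b w')" using u Inl by auto
    have "\<pi>' \<in> sw TV TE (A \<union> Ib b ` set [y]) (Suc n - length [y]) (Inl w')"
      using pi' Inl by (simp add: insert_commute)
    moreover have "\<pi>' \<noteq> []" using pi' unfolding sw_def by auto
    ultimately show ?thesis using pi w' bV
      by (intro exI[of _ "[y]"] exI[of _ \<pi>']) auto
  next
    case (Inr cy)
    then obtain c y' where cy: "u = Inr (c, y')" by (cases cy) auto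
    have c: "c = b" "Eg y y'" using u cy by auto
    from Suc.IH[OF pi'[unfolded cy c(1)]] obtain seg rest where
      IH: "\<pi>' = map (Ib b) seg @ rest" "seg \<noteq> []" "hd seg = y'" "distinct seg"
      "set seg \<subseteq> Vg" "iswalk Eg seg" "length seg \<le> Suc n"
      "rest = [] \<longrightarrow> length seg = Suc n"
      "rest \<noteq> [] \<longrightarrow> (\<exists>w'. E b w' \<and> w' \<in> V \<and> \<not> chi w' \<and> last seg = p (att b w') \<and> length seg \<le> n \<and>
        rest \<in> sw TV TE (insert (Inr (b, y)) A \<union> Ib b ` set seg) (n - length seg) (Inl w'))"
      by blast
    have ynot: "y \<notin> set seg"
    proof
      assume "y \<in> set seg"
      then have "Inr (b, y) \<in> set \<pi>'" using IH(1) by auto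
      then show False using pi' unfolding sw_def by auto
    qed
    have e: "insert (Inr (b, y)) A \<union> Ib b ` set seg = A \<union> Ib b ` set (y # seg)" by auto
    show ?thesis
    proof (intro exI[of _ "y # seg"] exI[of _ rest] conjI)
      show "\<pi> = map (Ib b) (y # seg) @ rest" using pi IH(1) by simp
      show "iswalk Eg (y # seg)" using IH(2,3,6) c by (simp add: iswalk_Cons)
      show "rest \<noteq> [] \<longrightarrow> (\<exists>w'. E b w' \<and> w' \<in> V \<and> \<not> chi w' \<and> last (y # seg) = p (att b w') \<and>
          length (y # seg) \<le> Suc n \<and>
          rest \<in> sw TV TE (A \<union> Ib b ` set (y # seg)) (Suc n - length (y # seg)) (Inl w'))"
        using IH(2,9) e by auto
    qed (use IH ynot bV in auto)
  qed
qed

lemma join: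
  assumes b: "b \<in> V" "chi b" and w: "w \<in> V" "\<not> chi w" "E b w"
    and w': "E b w'"
    and seg: "seg \<in> PP Vg Eg p (att b w) (att b w')"
    and rest: "rest \<in> sw TV TE A' k (Inl w')"
    and A: "Inl w \<notin> A" "Ib b ` set seg \<inter> A = {}"
    and A': "A \<union> {Inl w} \<union> Ib b ` set seg \<subseteq> A'"
  shows "Inl w # map (Ib b) seg @ rest \<in> sw TV TE A (k + length seg + 1) (Inl w)"
proof -
  have sg': "seg \<noteq> []" "hd seg = p (att b w)" "last seg = p (att b w')" "set seg \<subseteq> Vg"
    "distinct seg" "iswalk Eg seg" using seg unfolding PP_def by auto
  have r: "length rest = Suc k" "hd rest = Inl w'" "set rest \<subseteq> TV" "distinct rest" "iswalk TE rest"
    "set rest \<inter> A' = {}" using rest unfolding sw_def by auto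
  have rne: "rest \<noteq> []" using r(1) by auto
  have w'V: "w' \<in> V" "\<not> chi w'" using r(2,3) rne hd_in_set[OF rne] by (auto simp del: hd_in_set)
  let ?L = "Inl w # map (Ib b) seg @ rest"
  have "length ?L = Suc (k + length seg + 1)" using r(1) by simp
  moreover have "hd ?L = Inl w" by simp
  moreover have "set ?L \<subseteq> TV" using r(3) sg'(4) b w by auto
  moreover have "distinct ?L"
  proof -
    have "distinct (map (Ib b) seg)" using sg'(5) by (simp add: distinct_map inj_on_def)
    moreover have "set (map (Ib b) seg) \<inter> set rest = {}" using r(6) A' by auto
    moreover have "Inl w \<notin> set rest" using r(6) A' by auto
    ultimately show ?thesis using r(4) by auto
  qed
  moreover have "iswalk TE ?L"
  proof -
    have "iswalk TE (map (Ib b) seg)" unfolding iswalk_map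
      by (rule iswalk_mono[OF sg'(6)]) (simp add: b)
    moreover have "TE (Inl w) (Inr (b, hd seg))" using sg'(2) b w by simp
    moreover have "TE (Inr (b, last seg)) (Inl w')" using sg'(3) b w' w'V by simp
    ultimately show ?thesis using sg'(1) rne r(2,5)
      by (simp add: iswalk_Cons iswalk_append hd_map last_map)
  qed
  moreover have "set ?L \<inter> A = {}" using A A' r(6) by auto
  ultimately show ?thesis unfolding sw_def by blast
qed

lemma join_inj:
  assumes "Inl w # map (Ib b1) s1 @ r1 = Inl w # map (Ib b2) s2 @ r2"
    and "s1 \<noteq> []" "s2 \<noteq> []" "r1 \<noteq> []" "r2 \<noteq> []" "isl (hd r1)" "isl (hd r2)"
  shows "b1 = b2 \<and> s1 = s2 \<and> r1 = r2"
proof -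
  have tw: "takeWhile (\<lambda>x. \<not> isl x) (map (Ib b) s @ r) = map (Ib b) s" 
    if "r \<noteq> []" "isl (hd r)" for b s and r :: "('a + 'a \<times> 'c) list"
    using that by (induction s) (auto simp: neq_Nil_conv)
  have dw: "dropWhile (\<lambda>x. \<not> isl x) (map (Ib b) s @ r) = r" 
    if "r \<noteq> []" "isl (hd r)" for b s and r :: "('a + 'a \<times> 'c) list"
    using that by (induction s) (auto simp: neq_Nil_conv)
  have e: "map (Ib b1) s1 @ r1 = map (Ib b2) s2 @ r2" using assms(1) by simp
  have m: "map (Ib b1) s1 = map (Ib b2) s2" using tw[OF assms(4,6), of b1 s1] tw[OF assms(5,7), of b2 s2] e by simp
  have r: "r1 = r2" using dw[OF assms(4,6), of b1 s1] dw[OF assms(5,7), of b2 s2] e by simp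
  have "b1 = b2" using m assms(2,3) by (cases s1; cases s2) auto
  moreover then have "s1 = s2" using m by (simp add: inj_on_def inj_map_eq_map inj_def)
  ultimately show ?thesis using r by simp
qed

end


lemma sum_Sigma3:
  assumes "finite A" "\<forall>a\<in>A. finite (B a)" "\<forall>a\<in>A. \<forall>b\<in>B a. finite (C a b)"
  shows "(\<Sum>(a, b, c)\<in>Sigma A (\<lambda>a. Sigma (B a) (C a)). f a b c) = (\<Sum>a\<in>A. \<Sum>b\<in>B a. \<Sum>c\<in>C a b. f a b c)"
proof -
  have "(\<Sum>a\<in>A. \<Sum>b\<in>B a. \<Sum>c\<in>C a b. f a b c) = (\<Sum>a\<in>A. \<Sum>(b, c)\<in>Sigma (B a) (C a). f a b c)"
    by (rule sum.cong[OF refl], rule sum.Sigma) (use assms in auto)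
  also have "\<dots> = (\<Sum>(a, b, c)\<in>Sigma A (\<lambda>a. Sigma (B a) (C a)). f a b c)"
    by (subst sum.Sigma) (use assms in \<open>auto intro!: finite_SigmaI\<close>)
  finally show ?thesis by simp
qed

context setting
begin

definition lift :: "'a set \<Rightarrow> ('a + 'a \<times> 'c) set" where
  "lift B = Inl ` B \<union> {Inr (b, y) | b y. b \<in> B}"

lemma G_two_step:
  assumes w: "w \<in> V" "w \<notin> B"
  shows "real (card (sw V E B (Suc (Suc k)) w)) =
    (\<Sum>b\<in>nbrs E w - B. \<Sum>w'\<in>nbrs E b - insert w B. real (card (sw V E (insert b (insert w B)) k w')))"
proof -
  have fn: "finite (nbrs E x)" if "x \<in> V" for x using lf that unfolding locally_finite_def by auto
  have "real (card (sw V E B (Suc (Suc k)) w)) = (\<Sum>b\<in>nbrs E w. real (card (sw V E (insert w B) (Suc k) b)))"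
    using card_sw_Suc[OF sg lf w] by simp
  also have "\<dots> = (\<Sum>b\<in>nbrs E w - B. real (card (sw V E (insert w B) (Suc k) b)))"
    by (rule sum.mono_neutral_right) (auto simp: sw_empty fn[OF w(1)])
  also have "\<dots> = (\<Sum>b\<in>nbrs E w - B. \<Sum>w'\<in>nbrs E b - insert w B. real (card (sw V E (insert b (insert w B)) k w')))"
  proof (rule sum.cong[OF refl])
    fix b assume b: "b \<in> nbrs E w - B"
    have bV: "b \<in> V" using b sg_edge[OF sg] unfolding nbrs_def by auto
    have bw: "b \<noteq> w" using b sg_irrefl[OF sg] unfolding nbrs_def by auto
    have "real (card (sw V E (insert w B) (Suc k) b)) = (\<Sum>w'\<in>nbrs E b. real (card (sw V E (insert b (insert w B)) k w')))"
      using card_sw_Suc[OF sg lf bV, of "insert w B" k] b bw by simp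
    also have "\<dots> = (\<Sum>w'\<in>nbrs E b - insert w B. real (card (sw V E (insert b (insert w B)) k w')))"
      by (rule sum.mono_neutral_right) (auto simp: sw_empty fn[OF bV])
    finally show "real (card (sw V E (insert w B) (Suc k) b)) = (\<Sum>w'\<in>nbrs E b - insert w B. real (card (sw V E (insert b (insert w B)) k w')))" .
  qed
  finally show ?thesis .
qed

lemma lower_rec:
  assumes w: "w \<in> V" "\<not> chi w" "w \<notin> B"
  shows "(\<Sum>b\<in>nbrs E w - B. \<Sum>w'\<in>nbrs E b - insert w B. \<Sum>seg\<in>PP Vg Eg p (att b w) (att b w').
      if length seg + 1 \<le> n then real (card (sw TV TE (lift (insert b (insert w B))) (n - (length seg + 1)) (Inl w'))) else 0)
    \<le> real (card (sw TV TE (lift B) n (Inl w)))"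
proof -
  define Bs where "Bs = nbrs E w - B"
  define Ws where "Ws b = nbrs E b - insert w B" for b
  define Ss where "Ss b w' = {seg \<in> PP Vg Eg p (att b w) (att b w'). length seg + 1 \<le> n}" for b w'
  define R where "R b w' (seg::'c list) = sw TV TE (lift (insert b (insert w B))) (n - (length seg + 1)) (Inl w')" for b w' seg
  define J where "J b seg r = Inl w # map (Ib b) seg @ r" for b seg r
  define I where "I = Sigma Bs (\<lambda>b. Sigma (Ws b) (\<lambda>w'. Ss b w'))"
  define F where "F i = (case i of (b, w', seg) \<Rightarrow> J b seg ` R b w' seg)" for i
  have fn: "finite (nbrs E x)" if "x \<in> V" for x using lf that unfolding locally_finite_def by auto
  have bV: "b \<in> V" "chi b" "E b w" if "b \<in> Bs" for b
    using that sg_edge[OF sg] sg_sym[OF sg] bip_E w(2) unfolding Bs_def nbrs_def by auto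
  have w'V: "w' \<in> V" "\<not> chi w'" "E b w'" if "b \<in> Bs" "w' \<in> Ws b" for b w'
  proof -
    have b: "chi b" using bV[OF that(1)] by simp
    have e: "E b w'" using that(2) unfolding Ws_def nbrs_def by auto
    then show "w' \<in> V" "\<not> chi w'" "E b w'" using b sg_edge[OF sg e] bip_E[OF e] by auto
  qed
  have finI: "finite I" unfolding I_def Bs_def Ws_def Ss_def
    using fn[OF w(1)] fn finite_PP[OF finVg] sg_edge[OF sg]
    by (intro finite_SigmaI) (auto simp: nbrs_def)
  have finR: "finite (R b w' seg)" for b w' seg unfolding R_def by (rule finite_sw[OF sgT lfT])
  have sub: "(\<Union>i\<in>I. F i) \<subseteq> sw TV TE (lift B) n (Inl w)"
  proof
    fix x assume "x \<in> (\<Union>i\<in>I. F i)"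
    then obtain b w' seg r where i: "b \<in> Bs" "w' \<in> Ws b" "seg \<in> Ss b w'" and r: "r \<in> R b w' seg"
      and x: "x = J b seg r" unfolding I_def F_def by auto
    have seg: "seg \<in> PP Vg Eg p (att b w) (att b w')" "length seg + 1 \<le> n" using i(3) unfolding Ss_def by auto
    have bB: "b \<notin> B" using i(1) unfolding Bs_def by auto
    have "J b seg r \<in> sw TV TE (lift B) (n - (length seg + 1) + length seg + 1) (Inl w)"
      unfolding J_def
    proof (rule join[OF bV(1,2)[OF i(1)] w(1,2) bV(3)[OF i(1)] w'V(3)[OF i(1,2)] seg(1)])
      show "r \<in> sw TV TE (lift (insert b (insert w B))) (n - (length seg + 1)) (Inl w')"
        using r unfolding R_def .
      show "Inl w \<notin> lift B" using w(3) unfolding lift_def by auto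
      show "Ib b ` set seg \<inter> lift B = {}" using bB unfolding lift_def by auto
      show "lift B \<union> {Inl w} \<union> Ib b ` set seg \<subseteq> lift (insert b (insert w B))" unfolding lift_def by auto
    qed
    then show "x \<in> sw TV TE (lift B) n (Inl w)" using x seg(2) by simp
  qed
  have rprop: "r \<noteq> [] \<and> hd r = Inl w'" if "r \<in> R b w' seg" for r b w' seg
    using that unfolding R_def sw_def by auto
  have sprop: "seg \<noteq> []" if "b \<in> Bs" "w' \<in> Ws b" "seg \<in> Ss b w'" for b w' seg
    using that unfolding Ss_def PP_def by auto
  have disj: "\<forall>i\<in>I. \<forall>j\<in>I. i \<noteq> j \<longrightarrow> F i \<inter> F j = {}"
  proof (intro ballI impI)
    fix i j assume ij: "i \<in> I" "j \<in> I" "i \<noteq> j"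
    obtain b1 w1 s1 where i: "i = (b1, w1, s1)" by (cases i) auto
    obtain b2 w2 s2 where j: "j = (b2, w2, s2)" by (cases j) auto
    show "F i \<inter> F j = {}"
    proof (rule ccontr)
      assume "F i \<inter> F j \<noteq> {}"
      then obtain r1 r2 where r1: "r1 \<in> R b1 w1 s1" and r2: "r2 \<in> R b2 w2 s2" and e: "J b1 s1 r1 = J b2 s2 r2"
        unfolding F_def i j by auto
      have "b1 = b2 \<and> s1 = s2 \<and> r1 = r2"
        using join_inj[OF e[unfolded J_def]] rprop[OF r1] rprop[OF r2] sprop ij(1,2) i j unfolding I_def by auto
      moreover then have "w1 = w2" using rprop[OF r1] rprop[OF r2] by auto
      ultimately show False using ij(3) i j by simp
    qed
  qed
  have cardF: "card (F i) = card (R b w' seg)" if "i = (b, w', seg)" for i b w' seg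
  proof -
    have "inj_on (J b seg) (R b w' seg)" unfolding J_def by (auto intro: inj_onI)
    then show ?thesis unfolding F_def that by (simp add: card_image)
  qed
  have "card (\<Union>i\<in>I. F i) = (\<Sum>i\<in>I. card (F i))"
    by (rule card_UN_disjoint[OF finI _ disj]) (auto simp: F_def finR split: prod.splits)
  then have "real (card (\<Union>i\<in>I. F i)) = (\<Sum>i\<in>I. real (card (F i)))" by simp
  also have "\<dots> = (\<Sum>(b, w', seg)\<in>I. real (card (R b w' seg)))"
    by (intro sum.cong refl) (auto simp: cardF)
  also have "\<dots> = (\<Sum>b\<in>Bs. \<Sum>w'\<in>Ws b. \<Sum>seg\<in>Ss b w'. real (card (R b w' seg)))"
    unfolding I_def
  proof (rule sum_Sigma3)
    show "finite Bs" unfolding Bs_def using fn[OF w(1)] by simp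
    show "\<forall>b\<in>Bs. finite (Ws b)" unfolding Ws_def using bV fn by auto
    show "\<forall>b\<in>Bs. \<forall>w'\<in>Ws b. finite (Ss b w')" unfolding Ss_def using finite_PP[OF finVg] by auto
  qed
  also have "\<dots> = (\<Sum>b\<in>nbrs E w - B. \<Sum>w'\<in>nbrs E b - insert w B. \<Sum>seg\<in>PP Vg Eg p (att b w) (att b w').
      if length seg + 1 \<le> n then real (card (sw TV TE (lift (insert b (insert w B))) (n - (length seg + 1)) (Inl w'))) else 0)"
    unfolding Bs_def Ws_def Ss_def R_def
    by (rule sum.cong[OF refl], rule sum.cong[OF refl], rule sum.inter_filter[OF finite_PP[OF finVg]])
  finally have eq: "real (card (\<Union>i\<in>I. F i)) = (\<Sum>b\<in>nbrs E w - B. \<Sum>w'\<in>nbrs E b - insert w B. \<Sum>seg\<in>PP Vg Eg p (att b w) (att b w').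
      if length seg + 1 \<le> n then real (card (sw TV TE (lift (insert b (insert w B))) (n - (length seg + 1)) (Inl w'))) else 0)" .
  have "card (\<Union>i\<in>I. F i) \<le> card (sw TV TE (lift B) n (Inl w))"
    by (rule card_mono[OF finite_sw[OF sgT lfT] sub])
  then show ?thesis using eq by simp
qed

end


context setting
begin

abbreviation "GP \<equiv> PP Vg Eg p 0 1"

lemma Acnt_PP:
  assumes b: "b \<in> V" "chi b" "E b w" "E b w'" "w \<noteq> w'"
  shows "Acnt GP (Suc m) n = (\<Sum>seg\<in>PP Vg Eg p (att b w) (att b w').
            if length seg + 1 \<le> n then Acnt GP m (n - (length seg + 1)) else 0)"
proof -
  define f where "f k = (if k + 1 \<le> n then Acnt GP m (n - (k + 1)) else 0)" for k
  have nn: "0 \<le> f k" for k unfolding f_def by (simp add: Acnt_nn)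
  have "(\<Sum>seg\<in>PP Vg Eg p (att b w) (att b w'). f (length seg)) = (\<Sum>seg\<in>GP. f (length seg))"
    by (rule sum_PP_eq[OF lt nn att_in[OF b(1,2,3)] att_in[OF b(1,2,4)] att_inj[OF b]])
  then show ?thesis unfolding f_def by (simp only: Acnt.simps)
qed

lemma lower_main:
  "\<forall>n w B. w \<in> V \<longrightarrow> \<not> chi w \<longrightarrow>
     real (card (sw V E B (2*m) w)) * Acnt GP m n \<le> real (card (sw TV TE (lift B) n (Inl w)))"
proof (induction m)
  case 0
  show ?case
  proof (intro allI impI)
    fix n w B assume w: "w \<in> V" "\<not> chi w"
    show "real (card (sw V E B (2*0) w)) * Acnt GP 0 n \<le> real (card (sw TV TE (lift B) n (Inl w)))"
    proof (cases "w \<in> B \<or> n \<noteq> 0")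
      case True then show ?thesis by (auto simp: sw_0)
    next
      case False
      then have "Inl w \<notin> lift B" unfolding lift_def by auto
      then show ?thesis using False w by (simp add: sw_0)
    qed
  qed
next
  case (Suc m)
  show ?case
  proof (intro allI impI)
    fix n w B assume w: "w \<in> V" "\<not> chi w"
    show "real (card (sw V E B (2 * Suc m) w)) * Acnt GP (Suc m) n \<le> real (card (sw TV TE (lift B) n (Inl w)))"
    proof (cases "w \<in> B")
      case True then show ?thesis by (simp add: sw_empty)
    next
      case False
      have bprops: "b \<in> V \<and> chi b \<and> E b w" if "b \<in> nbrs E w - B" for b
        using that sg_edge[OF sg] sg_sym[OF sg] bip_E w(2) unfolding nbrs_def by auto
      have wprops: "w' \<in> V \<and> \<not> chi w' \<and> E b w' \<and> w \<noteq> w'" if "b \<in> nbrs E w - B" "w' \<in> nbrs E b - insert w B" for b w'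
      proof -
        have e: "E b w'" using that(2) unfolding nbrs_def by auto
        then show ?thesis using bprops[OF that(1)] sg_edge[OF sg e] bip_E[OF e] that(2) by auto
      qed
      have "real (card (sw V E B (2 * Suc m) w)) * Acnt GP (Suc m) n =
          (\<Sum>b\<in>nbrs E w - B. \<Sum>w'\<in>nbrs E b - insert w B. real (card (sw V E (insert b (insert w B)) (2*m) w')))
            * Acnt GP (Suc m) n"
        using G_two_step[OF w(1) False, of "2*m"] by simp
      also have "\<dots> = (\<Sum>b\<in>nbrs E w - B. \<Sum>w'\<in>nbrs E b - insert w B.
             real (card (sw V E (insert b (insert w B)) (2*m) w')) * Acnt GP (Suc m) n)"
        by (simp add: sum_distrib_right)
      also have "\<dots> = (\<Sum>b\<in>nbrs E w - B. \<Sum>w'\<in>nbrs E b - insert w B. \<Sum>seg\<in>PP Vg Eg p (att b w) (att b w').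
             if length seg + 1 \<le> n then real (card (sw V E (insert b (insert w B)) (2*m) w')) * Acnt GP m (n - (length seg + 1)) else 0)"
      proof (rule sum.cong[OF refl], rule sum.cong[OF refl])
        fix b w' assume bw: "b \<in> nbrs E w - B" "w' \<in> nbrs E b - insert w B"
        have bb: "b \<in> V" "chi b" "E b w" "E b w'" "w \<noteq> w'" using bprops[OF bw(1)] wprops[OF bw] by auto
        show "real (card (sw V E (insert b (insert w B)) (2*m) w')) * Acnt GP (Suc m) n =
          (\<Sum>seg\<in>PP Vg Eg p (att b w) (att b w'). if length seg + 1 \<le> n then
             real (card (sw V E (insert b (insert w B)) (2*m) w')) * Acnt GP m (n - (length seg + 1)) else 0)"
          unfolding Acnt_PP[OF bb] sum_distrib_left by (intro sum.cong refl) simp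
      qed
      also have "\<dots> \<le> (\<Sum>b\<in>nbrs E w - B. \<Sum>w'\<in>nbrs E b - insert w B. \<Sum>seg\<in>PP Vg Eg p (att b w) (att b w').
             if length seg + 1 \<le> n then real (card (sw TV TE (lift (insert b (insert w B))) (n - (length seg + 1)) (Inl w'))) else 0)"
      proof (rule sum_mono, rule sum_mono, rule sum_mono)
        fix b w' seg assume bw: "b \<in> nbrs E w - B" "w' \<in> nbrs E b - insert w B"
        have w': "w' \<in> V" "\<not> chi w'" using wprops[OF bw] by auto
        show "(if length seg + 1 \<le> n then real (card (sw V E (insert b (insert w B)) (2*m) w')) * Acnt GP m (n - (length seg + 1)) else 0)
          \<le> (if length seg + 1 \<le> n then real (card (sw TV TE (lift (insert b (insert w B))) (n - (length seg + 1)) (Inl w'))) else 0)"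
          using Suc.IH w' by auto
      qed
      also have "\<dots> \<le> real (card (sw TV TE (lift B) n (Inl w)))"
        by (rule lower_rec[OF w False])
      finally show ?thesis .
    qed
  qed
qed

lemma white_series:
  assumes w: "w \<in> V" "\<not> chi w"
  shows "sc V E w (2*m) * Acnt GP m n \<le> sc TV TE (Inl w) n"
proof -
  have "lift {} = {}" unfolding lift_def by auto
  moreover have "real (card (sw V E {} (2*m) w)) * Acnt GP m n \<le> real (card (sw TV TE (lift {}) n (Inl w)))"
    using lower_main[of m] w by blast
  ultimately show ?thesis by simp
qed

end


lemma exists_pow_ge:
  fixes q :: real and L :: nat
  assumes q: "0 < q" "q < 1"
  shows "\<exists>m\<ge>1. real m * real L + 1 \<le> (1/q) ^ m"
proof -
  have n1: "1 < norm (1/q)" using q by simp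
  have l1: "(\<lambda>m. real m / (1/q) ^ m) \<longlonglongrightarrow> 0" using lim_n_over_pown[OF n1] by simp
  have l2: "(\<lambda>m. q ^ m) \<longlonglongrightarrow> 0" by (rule LIMSEQ_power_zero) (use q in simp)
  have "(\<lambda>m. real L * (real m / (1/q) ^ m) + q ^ m) \<longlonglongrightarrow> real L * 0 + 0"
    by (intro tendsto_intros l1 l2)
  then have "eventually (\<lambda>m. real L * (real m / (1/q) ^ m) + q ^ m < 1) sequentially"
    by (intro order_tendstoD(2)) auto
  then obtain m where m: "m \<ge> 1" "real L * (real m / (1/q) ^ m) + q ^ m < 1"
    using eventually_ge_at_top[of 1] by (metis (mono_tags, lifting) eventually_at_top_linorder eventually_conj_iff order_refl)
  have pos: "0 < (1/q) ^ m" using q by simp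
  have "q ^ m = 1 / (1/q) ^ m" using q by (simp add: power_divide)
  then have "(real m * real L + 1) / (1/q) ^ m < 1" using m(2) by (simp add: add_divide_distrib algebra_simps)
  then have "real m * real L + 1 < (1/q) ^ m" using pos by (simp add: divide_less_eq)
  then show ?thesis using m(1) by (intro exI[of _ m]) auto
qed

lemma white_lower_abstract:
  fixes st s :: "nat \<Rightarrow> real" and A :: "nat \<Rightarrow> nat \<Rightarrow> real" and L :: nat
  assumes mu: "1 \<le> \<mu>" and xc: "0 < xc"
    and stnn: "\<And>n. 0 \<le> st n"
    and H1: "\<And>m n. s (2*m) * A m n \<le> st n"
    and H2: "\<forall>\<eta>. 0 < \<eta> \<longrightarrow> \<eta> < \<mu> \<longrightarrow> (\<exists>c>0. \<forall>n. c * (\<mu> - \<eta>) ^ n \<le> s n)"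
    and H3: "\<And>m. (\<Sum>n\<le>m*L. A m n * xc ^ n) = inverse (\<mu>^2) ^ m"
    and Ann: "\<And>m n. 0 \<le> A m n"
    and Apow: "\<And>m n k. A m n ^ k \<le> A (k*m) (k*n)"
    and A3: "\<And>m n. n < 3*m \<Longrightarrow> A m n = 0"
    and R: "\<And>N t. st (N + t) \<le> st N * (C * K ^ t)" and C1: "1 \<le> C" and K1: "1 \<le> K"
  shows "\<forall>\<delta>. 0 < \<delta> \<longrightarrow> \<delta> < 1/xc \<longrightarrow> (\<exists>c>0. \<forall>N. c * (1/xc - \<delta>) ^ N \<le> st N)"
proof (intro allI impI)
  fix \<delta> :: real assume d: "0 < \<delta>" "\<delta> < 1/xc"
  define q where "q = 1 - \<delta> * xc"
  have q: "0 < q" "q < 1" using d xc unfolding q_def by (auto simp: field_simps)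
  define \<rho> where "\<rho> = 1/xc - \<delta>"
  have rho: "\<rho> = q / xc" "0 < \<rho>" unfolding \<rho>_def q_def using xc d by (auto simp: field_simps)
  define \<eta> where "\<eta> = \<mu> * \<delta> * xc"
  have eta: "0 < \<eta>" "\<eta> < \<mu>" "\<mu> - \<eta> = \<mu> * q" unfolding \<eta>_def q_def using mu d xc q
    by (auto simp: field_simps)
  obtain c1 where c1: "c1 > 0" "\<And>n. c1 * (\<mu> * q) ^ n \<le> s n" using H2 eta by metis
  obtain m0 where m0: "m0 \<ge> 1" "real m0 * real L + 1 \<le> (1/q) ^ m0" using exists_pow_ge[OF q] by blast
  define P where "P = inverse (\<mu>^2) ^ m0"
  have Ppos: "0 < P" unfolding P_def using mu by simp
  define D where "D = real m0 * real L + 1"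
  have Dpos: "0 < D" unfolding D_def by (intro add_nonneg_pos) auto
  obtain n0 where n0: "n0 \<le> m0 * L" "P \<le> D * (A m0 n0 * xc ^ n0)"
  proof (rule ccontr)
    assume "\<not> thesis"
    with that have lt: "\<And>n. n \<le> m0 * L \<Longrightarrow> D * (A m0 n * xc ^ n) < P" by (meson not_le)
    have "(\<Sum>n\<le>m0*L. D * (A m0 n * xc ^ n)) < (\<Sum>n\<le>m0*L. P)"
      by (rule sum_strict_mono) (use lt in auto)
    then have "D * (\<Sum>n\<le>m0*L. A m0 n * xc ^ n) < D * P"
      by (simp add: sum_distrib_left D_def algebra_simps)
    then have "D * P < D * P" using H3[of m0] unfolding P_def by simp
    then show False by simp
  qed
  have a0pos: "0 < A m0 n0"
  proof -
    have "0 < D * (A m0 n0 * xc ^ n0)" using n0(2) Ppos by linarith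
    then show ?thesis using Dpos xc Ann[of m0 n0] by (simp add: zero_less_mult_iff)
  qed
  have n03: "3 * m0 \<le> n0" using A3[of n0 m0] a0pos by (cases "n0 < 3 * m0") auto
  have n0pos: "0 < n0" using n03 m0(1) by simp
  define a0 where "a0 = A m0 n0"
  have key: "(q / xc) ^ n0 \<le> (\<mu> * q) ^ (2 * m0) * a0"
  proof -
    have "(q / xc) ^ n0 = q ^ n0 / xc ^ n0" by (simp add: power_divide)
    also have "q ^ n0 \<le> q ^ (3 * m0)" using q n03 by (intro power_decreasing) auto
    then have "q ^ n0 / xc ^ n0 \<le> q ^ (3 * m0) / xc ^ n0" using xc by (simp add: divide_right_mono)
    also have "q ^ (3 * m0) = q ^ (2 * m0) * q ^ m0" by (simp flip: power_add)
    also have "q ^ m0 \<le> 1 / D"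
    proof -
      have "D \<le> (1/q) ^ m0" using m0(2) unfolding D_def .
      then have "D * q ^ m0 \<le> (1/q) ^ m0 * q ^ m0" using q by (intro mult_right_mono) auto
      also have "\<dots> = 1" using q by (simp add: power_divide)
      finally show ?thesis using Dpos by (simp add: field_simps)
    qed
    then have "q ^ (2 * m0) * q ^ m0 / xc ^ n0 \<le> q ^ (2 * m0) * (1 / D) / xc ^ n0"
      using q xc by (intro divide_right_mono mult_left_mono) auto
    also have "\<dots> = (\<mu> * q) ^ (2 * m0) * (P / (D * xc ^ n0))"
    proof -
      have e1: "(\<mu> * q) ^ (2 * m0) = \<mu> ^ (2 * m0) * q ^ (2 * m0)" by (rule power_mult_distrib)
      have e2: "P = inverse (\<mu> ^ (2 * m0))" unfolding P_def by (simp add: power_mult power_inverse)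
      have e3: "\<mu> ^ (2 * m0) * inverse (\<mu> ^ (2 * m0)) = 1" using mu by simp
      have "\<mu> \<noteq> 0" using mu by simp
      then show ?thesis unfolding e1 e2 using e3 by (simp add: field_simps)
    qed
    also have "P / (D * xc ^ n0) \<le> a0"
      unfolding a0_def using n0(2) Dpos xc by (simp add: divide_le_eq algebra_simps)
    then have "(\<mu> * q) ^ (2 * m0) * (P / (D * xc ^ n0)) \<le> (\<mu> * q) ^ (2 * m0) * a0"
      using mu q by (intro mult_left_mono) auto
    finally show ?thesis .
  qed
  have stk: "c1 * \<rho> ^ (k * n0) \<le> st (k * n0)" for k
  proof -
    have "\<rho> ^ (k * n0) = ((q / xc) ^ n0) ^ k" unfolding rho(1) by (simp add: power_mult[symmetric] mult.commute)
    then have "c1 * \<rho> ^ (k * n0) = c1 * ((q / xc) ^ n0) ^ k" by simp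
    also have "\<dots> \<le> c1 * ((\<mu> * q) ^ (2 * m0) * a0) ^ k"
      using key c1(1) xc q by (intro mult_left_mono power_mono) auto
    also have "\<dots> = c1 * (\<mu> * q) ^ (2 * (k * m0)) * a0 ^ k"
    proof -
      have ex: "2 * (k * m0) = 2 * m0 * k" by simp
      have "((\<mu> * q) ^ (2 * m0) * a0) ^ k = ((\<mu> * q) ^ (2 * m0)) ^ k * a0 ^ k" by (rule power_mult_distrib)
      also have "((\<mu> * q) ^ (2 * m0)) ^ k = (\<mu> * q) ^ (2 * (k * m0))" by (simp only: ex power_mult)
      finally show ?thesis by simp
    qed
    also have "\<dots> \<le> s (2 * (k * m0)) * A (k * m0) (k * n0)"
    proof (rule mult_mono)
      show "c1 * (\<mu> * q) ^ (2 * (k * m0)) \<le> s (2 * (k * m0))" by (rule c1(2))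
      show "a0 ^ k \<le> A (k * m0) (k * n0)" unfolding a0_def by (rule Apow)
      have "0 \<le> c1 * (\<mu> * q) ^ (2 * (k * m0))" using c1 mu q by simp
      then show "0 \<le> s (2 * (k * m0))" using c1(2)[of "2 * (k * m0)"] by linarith
      show "0 \<le> a0 ^ k" using a0pos unfolding a0_def by simp
    qed
    also have "\<dots> \<le> st (k * n0)" by (rule H1)
    finally show ?thesis .
  qed
  define c where "c = c1 * (min 1 \<rho>) ^ n0 / (C * K ^ n0)"
  have cpos: "0 < c" unfolding c_def using c1 rho C1 K1 by simp
  show "\<exists>c>0. \<forall>N. c * (1/xc - \<delta>) ^ N \<le> st N"
  proof (intro exI[of _ c] conjI allI cpos)
    fix N
    define k where "k = N div n0 + 1"
    define t where "t = k * n0 - N"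
    have d1: "N = N div n0 * n0 + N mod n0" by simp
    have d2: "N mod n0 < n0" using n0pos by simp
    have d3: "k * n0 = N div n0 * n0 + n0" unfolding k_def by (simp add: algebra_simps)
    have kN: "N < k * n0" "k * n0 - N \<le> n0" using d1 d2 d3 by linarith+
    have Nt: "k * n0 = N + t" unfolding t_def using kN by simp
    have tle: "t \<le> n0" unfolding t_def using kN by simp
    have "c1 * \<rho> ^ (N + t) \<le> st (N + t)" using stk[of k] Nt by simp
    also have "\<dots> \<le> st N * (C * K ^ t)" by (rule R)
    also have "\<dots> \<le> st N * (C * K ^ n0)"
      using stnn C1 K1 tle by (intro mult_left_mono mult_left_mono power_increasing) auto
    finally have a: "c1 * \<rho> ^ (N + t) \<le> st N * (C * K ^ n0)" .
    have "(min 1 \<rho>) ^ n0 \<le> \<rho> ^ t"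
    proof (cases "1 \<le> \<rho>")
      case True
      then have "(min 1 \<rho>) ^ n0 = 1" by simp
      moreover have "1 \<le> \<rho> ^ t" using True by simp
      ultimately show ?thesis by simp
    next
      case False
      then have "(min 1 \<rho>) ^ n0 = \<rho> ^ n0" by simp
      moreover have "\<rho> ^ n0 \<le> \<rho> ^ t" using False rho tle by (intro power_decreasing) auto
      ultimately show ?thesis by simp
    qed
    then have "c1 * \<rho> ^ N * (min 1 \<rho>) ^ n0 \<le> c1 * \<rho> ^ N * \<rho> ^ t"
      using c1 rho by (intro mult_left_mono) auto
    also have "\<dots> = c1 * \<rho> ^ (N + t)" by (simp add: power_add)
    finally have "c1 * \<rho> ^ N * (min 1 \<rho>) ^ n0 \<le> st N * (C * K ^ n0)" using a by linarith
    then have "c1 * (min 1 \<rho>) ^ n0 / (C * K ^ n0) * \<rho> ^ N \<le> st N"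
      using C1 K1 by (simp add: field_simps)
    then show "c * (1/xc - \<delta>) ^ N \<le> st N" unfolding c_def \<rho>_def by simp
  qed
qed


context setting
begin

definition invAB :: "('a + 'a \<times> 'c) set \<Rightarrow> 'a set \<Rightarrow> bool" where
  "invAB A B \<longleftrightarrow> (\<forall>u\<in>B. \<not> chi u \<longrightarrow> Inl u \<in> A) \<and>
     (\<forall>b\<in>B. chi b \<longrightarrow> (\<forall>w1 w2. E b w1 \<longrightarrow> E b w2 \<longrightarrow> w1 \<noteq> w2 \<longrightarrow>
        Inr (b, p (att b w1)) \<in> A \<or> Inr (b, p (att b w2)) \<in> A))"

lemma invAB_empty: "invAB A {}" unfolding invAB_def by simp

lemma inv_step:
  assumes inv: "invAB A B" and w: "\<not> chi w" and b: "b \<in> V" "chi b" "E b w" "E b w'" "w \<noteq> w'"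
    and seg: "seg \<in> PP Vg Eg p (att b w) (att b w')"
  shows "invAB (A \<union> {Inl w} \<union> Ib b ` set seg) (insert b (insert w B))"
proof -
  let ?A = "A \<union> {Inl w} \<union> Ib b ` set seg"
  have s: "seg \<noteq> []" "hd seg = p (att b w)" "last seg = p (att b w')" using seg unfolding PP_def by auto
  have p1: "Inr (b, p (att b w)) \<in> ?A" using s hd_in_set[OF s(1)] by (auto simp del: hd_in_set)
  have p2: "Inr (b, p (att b w')) \<in> ?A" using s last_in_set[OF s(1)] by (auto simp del: last_in_set)
  have bb: "Inr (b, p (att b w1)) \<in> ?A \<or> Inr (b, p (att b w2)) \<in> ?A"
    if "E b w1" "E b w2" "w1 \<noteq> w2" for w1 w2
  proof (rule ccontr)
    assume "\<not> ?thesis"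
    then have n: "w1 \<noteq> w" "w1 \<noteq> w'" "w2 \<noteq> w" "w2 \<noteq> w'" using p1 p2 by auto
    have fin: "finite (nbrs E b)" using lf b(1) unfolding locally_finite_def by auto
    have "{w, w', w1, w2} \<subseteq> nbrs E b" using b that unfolding nbrs_def by auto
    then have "card {w, w', w1, w2} \<le> card (nbrs E b)" by (rule card_mono[OF fin])
    also have "\<dots> = 3" using deg3 b by auto
    finally show False using n b(5) that(3) by auto
  qed
  show ?thesis unfolding invAB_def
  proof (intro conjI ballI impI allI)
    fix u assume "u \<in> insert b (insert w B)" "\<not> chi u"
    then show "Inl u \<in> ?A" using inv b(2) unfolding invAB_def by auto
  next
    fix c w1 w2 assume c: "c \<in> insert b (insert w B)" "chi c" "E c w1" "E c w2" "w1 \<noteq> w2"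
    show "Inr (c, p (att c w1)) \<in> ?A \<or> Inr (c, p (att c w2)) \<in> ?A"
    proof (cases "c = b")
      case True then show ?thesis using bb c by simp
    next
      case False
      then have "c \<in> B" using c(1,2) w by auto
      then show ?thesis using inv c unfolding invAB_def by blast
    qed
  qed
qed

lemma decomp_card:
  assumes w: "w \<in> V" "\<not> chi w" and inv: "invAB A B"
  shows "card (sw TV TE A (Suc n') (Inl w)) \<le> (\<Sum>b\<in>nbrs E w. card {seg \<in> DL Vg. length seg = Suc n'}) +
     (\<Sum>b\<in>nbrs E w - B. \<Sum>w'\<in>nbrs E b - insert w B. \<Sum>seg\<in>{seg \<in> PP Vg Eg p (att b w) (att b w'). length seg + 1 \<le> Suc n'}.
        card (sw TV TE (A \<union> {Inl w} \<union> Ib b ` set seg) (Suc n' - (length seg + 1)) (Inl w')))"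
proof -
  let ?n = "Suc n'"
  define Ss where "Ss b w' = {seg \<in> PP Vg Eg p (att b w) (att b w'). length seg + 1 \<le> ?n}" for b w'
  define RR where "RR b w' (seg::'c list) = sw TV TE (A \<union> {Inl w} \<union> Ib b ` set seg) (?n - (length seg + 1)) (Inl w')" for b w' seg
  define U1 where "U1 = (\<Union>b\<in>nbrs E w. (\<lambda>seg. Inl w # map (Ib b) seg) ` {seg \<in> DL Vg. length seg = ?n})"
  define U2 where "U2 = (\<Union>b\<in>nbrs E w - B. \<Union>w'\<in>nbrs E b - insert w B. \<Union>seg\<in>Ss b w'.
      (\<lambda>r. Inl w # map (Ib b) seg @ r) ` RR b w' seg)"
  have fn: "finite (nbrs E x)" if "x \<in> V" for x using lf that unfolding locally_finite_def by auto
  have nbV: "x \<in> V" if "x \<in> nbrs E y" for x y using that sg_edge[OF sg] unfolding nbrs_def by auto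
  have finSs: "finite (Ss b w')" for b w' unfolding Ss_def using finite_PP[OF finVg] by simp
  have finDLn: "finite {seg \<in> DL Vg. length seg = ?n}" using finite_DL[OF finVg] by simp
  have sub: "sw TV TE A ?n (Inl w) \<subseteq> U1 \<union> U2"
  proof
    fix \<pi> assume pi: "\<pi> \<in> sw TV TE A ?n (Inl w)"
    obtain b \<pi>' where b: "E b w" "\<pi> = Inl w # \<pi>'" and pi': "\<pi>' \<in> sw TV TE (insert (Inl w) A) n' (Inr (b, p (att b w)))"
      using first_step[OF pi] by blast
    have bV: "b \<in> V" "chi b" using sg_edge[OF sg b(1)] bip_E[OF b(1)] w(2) by auto
    have bw: "b \<in> nbrs E w" using sg_sym[OF sg b(1)] unfolding nbrs_def by simp
    obtain seg rest where sp: "\<pi>' = map (Ib b) seg @ rest" "seg \<noteq> []" "hd seg = p (att b w)" "distinct seg"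
      "set seg \<subseteq> Vg" "iswalk Eg seg" "length seg \<le> Suc n'" "rest = [] \<longrightarrow> length seg = Suc n'"
      "rest \<noteq> [] \<longrightarrow> (\<exists>w'. E b w' \<and> w' \<in> V \<and> \<not> chi w' \<and> last seg = p (att b w') \<and> length seg \<le> n' \<and>
        rest \<in> sw TV TE (insert (Inl w) A \<union> Ib b ` set seg) (n' - length seg) (Inl w'))"
      using split_gadget[OF pi'] by blast
    show "\<pi> \<in> U1 \<union> U2"
    proof (cases "rest = []")
      case True
      then have "seg \<in> {seg \<in> DL Vg. length seg = ?n}" using sp unfolding DL_def by auto
      then have "\<pi> \<in> U1" unfolding U1_def using bw b(2) sp(1) True by auto
      then show ?thesis by simp
    next
      case False
      then obtain w' where w': "E b w'" "w' \<in> V" "\<not> chi w'" "last seg = p (att b w')" "length seg \<le> n'"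
        "rest \<in> sw TV TE (insert (Inl w) A \<union> Ib b ` set seg) (n' - length seg) (Inl w')"
        using sp(9) by blast
      have rne: "rest \<noteq> []" "hd rest = Inl w'" using w'(6) unfolding sw_def by auto
      have rav: "set rest \<inter> (insert (Inl w) A \<union> Ib b ` set seg) = {}" using w'(6) unfolding sw_def by auto
      have w'r: "Inl w' \<in> set rest" using rne hd_in_set[OF rne(1)] by simp
      have ww': "w' \<noteq> w" using w'r rav by auto
      have w'B: "w' \<notin> B"
      proof
        assume "w' \<in> B"
        then have "Inl w' \<in> A" using inv w'(3) unfolding invAB_def by auto
        then show False using w'r rav by auto
      qed
      have pav: "set \<pi>' \<inter> insert (Inl w) A = {}" using pi' unfolding sw_def by auto
      have bB: "b \<notin> B"
      proof
        assume "b \<in> B"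
        then have "Inr (b, p (att b w)) \<in> A \<or> Inr (b, p (att b w')) \<in> A"
          using inv bV b(1) w'(1) ww' unfolding invAB_def by metis
        moreover have "Inr (b, p (att b w)) \<in> set \<pi>'" using sp(1,2,3) hd_in_set[OF sp(2)] by (auto simp del: hd_in_set)
        moreover have "Inr (b, p (att b w')) \<in> set \<pi>'" using sp(1,2) w'(4) last_in_set[OF sp(2)] by (auto simp del: last_in_set)
        ultimately show False using pav by auto
      qed
      have segPP: "seg \<in> PP Vg Eg p (att b w) (att b w')" using sp w'(4) unfolding PP_def by auto
      have inSs: "seg \<in> Ss b w'" unfolding Ss_def using segPP w'(5) by simp
      have eqA: "insert (Inl w) A \<union> Ib b ` set seg = A \<union> {Inl w} \<union> Ib b ` set seg" by auto
      have rR: "rest \<in> RR b w' seg" unfolding RR_def using w'(6) eqA w'(5) by simp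
      have "b \<in> nbrs E w - B" using bw bB by simp
      moreover have "w' \<in> nbrs E b - insert w B" using w'(1) ww' w'B unfolding nbrs_def by simp
      ultimately have "\<pi> \<in> U2" unfolding U2_def using inSs rR b(2) sp(1) by blast
      then show ?thesis by simp
    qed
  qed
  have c1: "card U1 \<le> (\<Sum>b\<in>nbrs E w. card {seg \<in> DL Vg. length seg = ?n})"
    unfolding U1_def
    by (rule order_trans[OF card_UN_le[OF fn[OF w(1)]]]) (intro sum_mono card_image_le finDLn)
  have c2: "card U2 \<le> (\<Sum>b\<in>nbrs E w - B. \<Sum>w'\<in>nbrs E b - insert w B. \<Sum>seg\<in>Ss b w'. card (RR b w' seg))"
    unfolding U2_def
  proof (rule order_trans[OF card_UN_le], simp add: fn[OF w(1)], rule sum_mono)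
    fix b assume b: "b \<in> nbrs E w - B"
    show "card (\<Union>w'\<in>nbrs E b - insert w B. \<Union>seg\<in>Ss b w'. (\<lambda>r. Inl w # map (Ib b) seg @ r) ` RR b w' seg)
        \<le> (\<Sum>w'\<in>nbrs E b - insert w B. \<Sum>seg\<in>Ss b w'. card (RR b w' seg))"
    proof -
      have bV': "b \<in> V" using nbV b by auto
      have fin': "finite (nbrs E b - insert w B)" using fn[OF bV'] by simp
      show ?thesis
    proof (rule order_trans[OF card_UN_le[OF fin']], rule sum_mono)
      fix w' assume w': "w' \<in> nbrs E b - insert w B"
      show "card (\<Union>seg\<in>Ss b w'. (\<lambda>r. Inl w # map (Ib b) seg @ r) ` RR b w' seg) \<le> (\<Sum>seg\<in>Ss b w'. card (RR b w' seg))"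
        by (rule order_trans[OF card_UN_le[OF finSs]]) (intro sum_mono card_image_le, simp add: RR_def finite_sw[OF sgT lfT])
    qed
    qed
  qed
  show ?thesis
  proof -
    have f1: "finite U1" unfolding U1_def using fn[OF w(1)] finDLn by auto
    have f2: "finite U2" unfolding U2_def
    proof (intro finite_UN_I)
      show "finite (nbrs E w - B)" using fn[OF w(1)] by simp
      fix b w' seg assume "b \<in> nbrs E w - B"
      then show "finite (nbrs E b - insert w B)" using fn nbV by blast
      show "finite (Ss b w')" by (rule finSs)
      show "finite ((\<lambda>r. Inl w # map (Ib b) seg @ r) ` RR b w' seg)" unfolding RR_def
        by (intro finite_imageI finite_sw[OF sgT lfT])
    qed
    have "card (sw TV TE A ?n (Inl w)) \<le> card (U1 \<union> U2)" by (rule card_mono[OF _ sub]) (use f1 f2 in simp)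
    also have "\<dots> \<le> card U1 + card U2" by (rule card_Un_le)
    finally show ?thesis using c1 c2 unfolding Ss_def RR_def by linarith
  qed
qed

end


lemma T1_bound:
  fixes x :: real
  assumes S: "finite S" and x: "0 \<le> x"
  shows "(\<Sum>n'\<le>N'. real (card {seg \<in> S. length seg = Suc n'}) * x ^ Suc n') \<le> (\<Sum>seg\<in>S. x ^ length seg)"
proof -
  have e1: "real (card {seg \<in> S. length seg = Suc n'}) * x ^ Suc n' =
      (\<Sum>seg\<in>S. if length seg = Suc n' then x ^ length seg else 0)" for n'
  proof -
    have "real (card {seg \<in> S. length seg = Suc n'}) * x ^ Suc n' = (\<Sum>seg\<in>{seg \<in> S. length seg = Suc n'}. x ^ Suc n')"
      by simp
    also have "\<dots> = (\<Sum>seg\<in>S. if length seg = Suc n' then x ^ Suc n' else 0)"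
      by (rule sum.inter_filter[OF S])
    also have "\<dots> = (\<Sum>seg\<in>S. if length seg = Suc n' then x ^ length seg else 0)"
      by (intro sum.cong refl) auto
    finally show ?thesis .
  qed
  have "(\<Sum>n'\<le>N'. real (card {seg \<in> S. length seg = Suc n'}) * x ^ Suc n') =
      (\<Sum>n'\<le>N'. \<Sum>seg\<in>S. if length seg = Suc n' then x ^ length seg else 0)"
    using e1 by simp
  also have "\<dots> = (\<Sum>seg\<in>S. \<Sum>n'\<le>N'. if length seg = Suc n' then x ^ length seg else 0)"
    by (rule sum.swap)
  also have "\<dots> \<le> (\<Sum>seg\<in>S. x ^ length seg)"
  proof (rule sum_mono)
    fix seg :: "'a list"
    have "(\<Sum>n'\<le>N'. if length seg = Suc n' then x ^ length seg else 0) =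
        (\<Sum>n'\<le>N'. if length seg - 1 = n' then (if length seg \<noteq> 0 then x ^ length seg else 0) else 0)"
      by (intro sum.cong refl) auto
    also have "\<dots> = (if length seg - 1 \<in> {..N'} then (if length seg \<noteq> 0 then x ^ length seg else 0) else 0)"
      by (rule sum.delta') simp
    also have "\<dots> \<le> x ^ length seg" using x by auto
    finally show "(\<Sum>n'\<le>N'. if length seg = Suc n' then x ^ length seg else 0) \<le> x ^ length seg" .
  qed
  finally show ?thesis .
qed

lemma inner_shift:
  fixes g :: "nat \<Rightarrow> real"
  assumes l: "1 \<le> l"
  shows "(\<Sum>n'\<le>N'. if l \<le> Suc n' then g (Suc n' - l) * x ^ Suc n' else 0) =
    (if l \<le> Suc N' then x ^ l * (\<Sum>n\<le>Suc N' - l. g n * x ^ n) else 0)"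
proof (cases "l \<le> Suc N'")
  case True
  have "(\<Sum>n\<le>Suc N'. if l \<le> n then g (n - l) * x ^ n else 0) =
      (if l \<le> 0 then g (0 - l) * x ^ 0 else 0) + (\<Sum>n'\<le>N'. if l \<le> Suc n' then g (Suc n' - l) * x ^ Suc n' else 0)"
    by (rule sum.atMost_Suc_shift)
  then have "(\<Sum>n'\<le>N'. if l \<le> Suc n' then g (Suc n' - l) * x ^ Suc n' else 0) =
      (\<Sum>n\<le>Suc N'. if l \<le> n then g (n - l) * x ^ n else 0)" using l by simp
  also have "\<dots> = x ^ l * (\<Sum>n\<le>Suc N' - l. g n * x ^ n)" by (rule shift_sum[OF True])
  finally show ?thesis using True by simp
next
  case False
  then show ?thesis by (intro trans[OF sum.neutral]) auto
qed

context setting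
begin

lemma AW:
  fixes x D :: real
  assumes x: "0 \<le> x" and D0: "0 \<le> D" and Dd: "\<forall>v\<in>V. real (card (nbrs E v)) \<le> D"
  defines "Q \<equiv> (\<Sum>seg\<in>DL Vg. x ^ length seg)"
  defines "h \<equiv> hP GP x"
  defines "K \<equiv> 1 + D * Q"
  shows "\<forall>w A B. w \<in> V \<longrightarrow> \<not> chi w \<longrightarrow> invAB A B \<longrightarrow>
     (\<Sum>n\<le>N. real (card (sw TV TE A n (Inl w))) * x ^ n) \<le> K * (\<Sum>m\<le>N. real (card (sw V E B (2*m) w)) * h ^ m)"
proof (induction N rule: less_induct)
  case (less N)
  have Q0: "0 \<le> Q" unfolding Q_def using x by (intro sum_nonneg) auto
  have h0: "0 \<le> h" unfolding h_def hP_def using x by (intro sum_nonneg) auto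
  have K1: "1 \<le> K" unfolding K_def using Q0 D0 by simp
  have fn: "finite (nbrs E v)" if "v \<in> V" for v using lf that unfolding locally_finite_def by auto
  have nbV: "v \<in> V" if "v \<in> nbrs E u" for u v using that sg_edge[OF sg] unfolding nbrs_def by auto
  show ?case
  proof (intro allI impI)
    fix w A B assume w: "w \<in> V" "\<not> chi w" and inv: "invAB A B"
    define f where "f n = real (card (sw TV TE A n (Inl w))) * x ^ n" for n
    define SG where "SG B' w' m = real (card (sw V E B' m w'))" for B' w' m
    have SGnn: "0 \<le> SG B' w' m" for B' w' m unfolding SG_def by simp
    have RHS0: "0 \<le> K * (\<Sum>m\<le>N. SG B w (2*m) * h ^ m)"
      using K1 h0 SGnn by (intro mult_nonneg_nonneg sum_nonneg) auto
    show "(\<Sum>n\<le>N. real (card (sw TV TE A n (Inl w))) * x ^ n) \<le> K * (\<Sum>m\<le>N. real (card (sw V E B (2*m) w)) * h ^ m)"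
    proof (cases "w \<in> B")
      case True
      then have "Inl w \<in> A" using inv w(2) unfolding invAB_def by auto
      then have "sw TV TE A n (Inl w) = {}" for n by (simp add: sw_empty)
      then show ?thesis using RHS0 unfolding SG_def by simp
    next
      case False
      have SG0: "SG B w 0 = 1" unfolding SG_def using w False by (simp add: sw_0)
      have f0: "f 0 \<le> 1" unfolding f_def by (simp add: sw_0)
      show ?thesis
      proof (cases N)
        case 0
        have "(\<Sum>n\<le>N. f n) \<le> 1" using f0 0 by simp
        also have "1 \<le> K * (\<Sum>m\<le>N. SG B w (2*m) * h ^ m)" using 0 SG0 K1 by simp
        finally show ?thesis unfolding f_def SG_def .
      next
        case (Suc N')
        define T1 where "T1 n' = real (card (nbrs E w)) * real (card {seg \<in> DL Vg. length seg = Suc n'})" for n'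
        define A' where "A' b seg = A \<union> {Inl w} \<union> Ib b ` set seg" for b and seg :: "'c list"
        define B' where "B' b = insert b (insert w B)" for b
        define G where "G b w' seg k = real (card (sw TV TE (A' b seg) k (Inl w')))" for b w' and seg :: "'c list" and k
        define T2 where "T2 n' = (\<Sum>b\<in>nbrs E w - B. \<Sum>w'\<in>nbrs E b - insert w B. \<Sum>seg\<in>PP Vg Eg p (att b w) (att b w').
           if length seg + 1 \<le> Suc n' then G b w' seg (Suc n' - (length seg + 1)) else 0)" for n'
        have fS: "f (Suc n') \<le> (T1 n' + T2 n') * x ^ Suc n'" for n'
        proof -
          have c: "card (sw TV TE A (Suc n') (Inl w)) \<le> (\<Sum>b\<in>nbrs E w. card {seg \<in> DL Vg. length seg = Suc n'}) +
             (\<Sum>b\<in>nbrs E w - B. \<Sum>w'\<in>nbrs E b - insert w B. \<Sum>seg\<in>{seg \<in> PP Vg Eg p (att b w) (att b w'). length seg + 1 \<le> Suc n'}.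
                card (sw TV TE (A \<union> {Inl w} \<union> Ib b ` set seg) (Suc n' - (length seg + 1)) (Inl w')))"
            by (rule decomp_card[OF w inv])
          have "real (card (sw TV TE A (Suc n') (Inl w))) \<le> T1 n' + T2 n'"
          proof -
            have "real (card (sw TV TE A (Suc n') (Inl w))) \<le> real (\<Sum>b\<in>nbrs E w. card {seg \<in> DL Vg. length seg = Suc n'}) +
             real (\<Sum>b\<in>nbrs E w - B. \<Sum>w'\<in>nbrs E b - insert w B. \<Sum>seg\<in>{seg \<in> PP Vg Eg p (att b w) (att b w'). length seg + 1 \<le> Suc n'}.
                card (sw TV TE (A \<union> {Inl w} \<union> Ib b ` set seg) (Suc n' - (length seg + 1)) (Inl w')))"
              using c by (simp only: of_nat_add[symmetric] of_nat_le_iff)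
            also have "real (\<Sum>b\<in>nbrs E w. card {seg \<in> DL Vg. length seg = Suc n'}) = T1 n'"
              unfolding T1_def by simp
            also have "real (\<Sum>b\<in>nbrs E w - B. \<Sum>w'\<in>nbrs E b - insert w B. \<Sum>seg\<in>{seg \<in> PP Vg Eg p (att b w) (att b w'). length seg + 1 \<le> Suc n'}.
                card (sw TV TE (A \<union> {Inl w} \<union> Ib b ` set seg) (Suc n' - (length seg + 1)) (Inl w'))) = T2 n'"
              unfolding T2_def G_def A'_def of_nat_sum
              by (rule sum.cong[OF refl], rule sum.cong[OF refl], rule sum.inter_filter[OF finite_PP[OF finVg]])
            finally show ?thesis .
          qed
          then show ?thesis unfolding f_def using x by (intro mult_right_mono) auto
        qed
        have sumT1: "(\<Sum>n'\<le>N'. T1 n' * x ^ Suc n') \<le> D * Q"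
        proof -
          have "(\<Sum>n'\<le>N'. T1 n' * x ^ Suc n') = real (card (nbrs E w)) * (\<Sum>n'\<le>N'. real (card {seg \<in> DL Vg. length seg = Suc n'}) * x ^ Suc n')"
            unfolding T1_def by (simp add: sum_distrib_left mult.assoc)
          also have "\<dots> \<le> D * Q" unfolding Q_def
          proof (rule mult_mono)
            show "0 \<le> (\<Sum>n'\<le>N'. real (card {seg \<in> DL Vg. length seg = Suc n'}) * x ^ Suc n')"
              using x by (intro sum_nonneg) auto
          qed (use T1_bound[OF finite_DL[OF finVg] x, of N'] Dd w(1) D0 in auto)
          finally show ?thesis .
        qed
        define Z where "Z b w' = (\<Sum>m\<le>N'. SG (B' b) w' (2*m) * h ^ m)" for b w'
        have bprops: "b \<in> V \<and> chi b \<and> E b w" if "b \<in> nbrs E w - B" for b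
          using that sg_edge[OF sg] sg_sym[OF sg] bip_E w(2) unfolding nbrs_def by auto
        have wprops: "w' \<in> V \<and> \<not> chi w' \<and> E b w' \<and> w \<noteq> w' \<and> w' \<notin> B" if "b \<in> nbrs E w - B" "w' \<in> nbrs E b - insert w B" for b w'
        proof -
          have e: "E b w'" using that(2) unfolding nbrs_def by auto
          then show ?thesis using bprops[OF that(1)] sg_edge[OF sg e] bip_E[OF e] that(2) by auto
        qed
        have inner: "(\<Sum>n'\<le>N'. (if length seg + 1 \<le> Suc n' then G b w' seg (Suc n' - (length seg + 1)) else 0) * x ^ Suc n')
            \<le> x ^ (length seg + 1) * (K * Z b w')"
          if bw: "b \<in> nbrs E w - B" "w' \<in> nbrs E b - insert w B" and seg: "seg \<in> PP Vg Eg p (att b w) (att b w')" for b w' seg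
        proof -
          have bb: "b \<in> V" "chi b" "E b w" using bprops[OF bw(1)] by auto
          have ww: "w' \<in> V" "\<not> chi w'" "E b w'" "w \<noteq> w'" "w' \<notin> B" using wprops[OF bw] by auto
          have "(\<Sum>n'\<le>N'. (if length seg + 1 \<le> Suc n' then G b w' seg (Suc n' - (length seg + 1)) else 0) * x ^ Suc n') =
              (\<Sum>n'\<le>N'. if length seg + 1 \<le> Suc n' then G b w' seg (Suc n' - (length seg + 1)) * x ^ Suc n' else 0)"
            by (intro sum.cong refl) auto
          also have "\<dots> = (if length seg + 1 \<le> Suc N' then x ^ (length seg + 1) * (\<Sum>n\<le>Suc N' - (length seg + 1). G b w' seg n * x ^ n) else 0)"
            by (rule inner_shift) simp
          also have "\<dots> \<le> x ^ (length seg + 1) * (K * Z b w')"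
          proof (cases "length seg + 1 \<le> Suc N'")
            case True
            have lt: "Suc N' - (length seg + 1) < N" using Suc by simp
            have invn: "invAB (A' b seg) (B' b)" unfolding A'_def B'_def
              by (rule inv_step[OF inv w(2) bb(1,2,3) ww(3,4) seg])
            have IH: "(\<Sum>n\<le>Suc N' - (length seg + 1). G b w' seg n * x ^ n) \<le>
                K * (\<Sum>m\<le>Suc N' - (length seg + 1). SG (B' b) w' (2*m) * h ^ m)"
              using less.IH[OF lt] ww(1,2) invn unfolding G_def SG_def by blast
            also have "\<dots> \<le> K * Z b w'" unfolding Z_def
              using K1 SGnn h0 by (intro mult_left_mono sum_mono2) auto
            finally show ?thesis using True x by (simp add: mult_left_mono)
          next
            case False
            have "0 \<le> Z b w'" unfolding Z_def using SGnn h0 by (intro sum_nonneg) auto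
            then show ?thesis using False x K1 by simp
          qed
          finally show ?thesis .
        qed
        have sumT2: "(\<Sum>n'\<le>N'. T2 n' * x ^ Suc n') \<le> K * (\<Sum>m\<le>N'. SG B w (2 * Suc m) * h ^ Suc m)"
        proof -
          have "(\<Sum>n'\<le>N'. T2 n' * x ^ Suc n') = (\<Sum>b\<in>nbrs E w - B. \<Sum>w'\<in>nbrs E b - insert w B. \<Sum>seg\<in>PP Vg Eg p (att b w) (att b w').
              \<Sum>n'\<le>N'. (if length seg + 1 \<le> Suc n' then G b w' seg (Suc n' - (length seg + 1)) else 0) * x ^ Suc n')"
            unfolding T2_def sum_distrib_right
            by (subst sum.swap, rule sum.cong[OF refl], subst sum.swap, rule sum.cong[OF refl], subst sum.swap, rule refl)
          also have "\<dots> \<le> (\<Sum>b\<in>nbrs E w - B. \<Sum>w'\<in>nbrs E b - insert w B. \<Sum>seg\<in>PP Vg Eg p (att b w) (att b w').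
              x ^ (length seg + 1) * (K * Z b w'))"
            by (intro sum_mono inner) auto
          also have "\<dots> = (\<Sum>b\<in>nbrs E w - B. \<Sum>w'\<in>nbrs E b - insert w B. h * (K * Z b w'))"
          proof (rule sum.cong[OF refl], rule sum.cong[OF refl])
            fix b w' assume bw: "b \<in> nbrs E w - B" "w' \<in> nbrs E b - insert w B"
            have bb: "b \<in> V" "chi b" "E b w" using bprops[OF bw(1)] by auto
            have ww: "E b w'" "w \<noteq> w'" using wprops[OF bw] by auto
            have "(\<Sum>seg\<in>PP Vg Eg p (att b w) (att b w'). x ^ (length seg + 1)) = (\<Sum>seg\<in>GP. x ^ (length seg + 1))"
              by (rule sum_PP_eq[OF lt _ att_in[OF bb] att_in[OF bb(1,2) ww(1)] att_inj[OF bb(1,2,3) ww]]) (use x in simp)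
            also have "\<dots> = h" unfolding h_def hP_def ..
            finally show "(\<Sum>seg\<in>PP Vg Eg p (att b w) (att b w'). x ^ (length seg + 1) * (K * Z b w')) = h * (K * Z b w')"
              by (simp add: sum_distrib_right[symmetric])
          qed
          also have "\<dots> = K * (\<Sum>m\<le>N'. h ^ Suc m * (\<Sum>b\<in>nbrs E w - B. \<Sum>w'\<in>nbrs E b - insert w B. SG (B' b) w' (2*m)))"
            unfolding Z_def sum_distrib_left sum_distrib_right
            by (subst sum.swap, rule sum.cong[OF refl], subst sum.swap, rule sum.cong[OF refl], rule sum.cong[OF refl])
               (simp add: algebra_simps)
          also have "\<dots> = K * (\<Sum>m\<le>N'. SG B w (2 * Suc m) * h ^ Suc m)"
          proof -
            have "(\<Sum>b\<in>nbrs E w - B. \<Sum>w'\<in>nbrs E b - insert w B. SG (B' b) w' (2*m)) = SG B w (2 * Suc m)" for m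
              using G_two_step[OF w(1) False, of "2*m"] unfolding SG_def B'_def by simp
            then show ?thesis by (simp add: mult.commute)
          qed
          finally show ?thesis .
        qed
        have "(\<Sum>n\<le>N. f n) = f 0 + (\<Sum>n'\<le>N'. f (Suc n'))" unfolding Suc by (rule sum.atMost_Suc_shift)
        also have "\<dots> \<le> 1 + (\<Sum>n'\<le>N'. T1 n' * x ^ Suc n' + T2 n' * x ^ Suc n')"
          using f0 fS by (intro add_mono sum_mono) (auto simp: algebra_simps)
        also have "\<dots> \<le> 1 + D * Q + K * (\<Sum>m\<le>N'. SG B w (2 * Suc m) * h ^ Suc m)"
          using sumT1 sumT2 by (simp add: sum.distrib)
        also have "\<dots> = K * (SG B w (2 * 0) * h ^ 0 + (\<Sum>m\<le>N'. SG B w (2 * Suc m) * h ^ Suc m))"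
          using SG0 unfolding K_def by (simp add: algebra_simps)
        also have "\<dots> = K * (\<Sum>m\<le>N. SG B w (2 * m) * h ^ m)"
          unfolding Suc by (subst sum.atMost_Suc_shift) simp
        finally show ?thesis unfolding f_def SG_def .
      qed
    qed
  qed
qed

end


context setting
begin

lemma gadget_split_card:
  assumes b0: "b0 \<in> V" "chi b0"
  shows "card (sw TV TE {} n (Inr (b0, y0))) \<le> card {seg \<in> DL Vg. length seg = Suc n} +
    (\<Sum>w1\<in>nbrs E b0. \<Sum>seg\<in>{seg \<in> DL Vg. length seg \<le> n}. card (sw TV TE (Ib b0 ` set seg) (n - length seg) (Inl w1)))"
proof -
  define U1 where "U1 = map (Ib b0) ` {seg \<in> DL Vg. length seg = Suc n}"
  define U2 where "U2 = (\<Union>w1\<in>nbrs E b0. \<Union>seg\<in>{seg \<in> DL Vg. length seg \<le> n}.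
     (\<lambda>r. map (Ib b0) seg @ r) ` sw TV TE (Ib b0 ` set seg) (n - length seg) (Inl w1))"
  have fn: "finite (nbrs E b0)" using lf b0 unfolding locally_finite_def by auto
  have fDL: "finite {seg \<in> DL Vg. P seg}" for P using finite_DL[OF finVg] by simp
  have sub: "sw TV TE {} n (Inr (b0, y0)) \<subseteq> U1 \<union> U2"
  proof
    fix \<pi> assume pi: "\<pi> \<in> sw TV TE {} n (Inr (b0, y0))"
    obtain seg rest where sp: "\<pi> = map (Ib b0) seg @ rest" "seg \<noteq> []" "hd seg = y0" "distinct seg"
      "set seg \<subseteq> Vg" "iswalk Eg seg" "length seg \<le> Suc n" "rest = [] \<longrightarrow> length seg = Suc n"
      "rest \<noteq> [] \<longrightarrow> (\<exists>w'. E b0 w' \<and> w' \<in> V \<and> \<not> chi w' \<and> last seg = p (att b0 w') \<and> length seg \<le> n \<and>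
        rest \<in> sw TV TE ({} \<union> Ib b0 ` set seg) (n - length seg) (Inl w'))"
      using split_gadget[OF pi] by blast
    have sDL: "seg \<in> DL Vg" using sp unfolding DL_def by auto
    show "\<pi> \<in> U1 \<union> U2"
    proof (cases "rest = []")
      case True then show ?thesis using sp sDL unfolding U1_def by auto
    next
      case False
      then obtain w' where w': "E b0 w'" "length seg \<le> n" "rest \<in> sw TV TE (Ib b0 ` set seg) (n - length seg) (Inl w')"
        using sp(9) by auto
      have "w' \<in> nbrs E b0" using w'(1) unfolding nbrs_def by simp
      then show ?thesis unfolding U2_def using sp(1) sDL w' by blast
    qed
  qed
  have c1: "card U1 \<le> card {seg \<in> DL Vg. length seg = Suc n}" unfolding U1_def by (rule card_image_le[OF fDL])
  have c2: "card U2 \<le> (\<Sum>w1\<in>nbrs E b0. \<Sum>seg\<in>{seg \<in> DL Vg. length seg \<le> n}. card (sw TV TE (Ib b0 ` set seg) (n - length seg) (Inl w1)))"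
    unfolding U2_def
    by (rule order_trans[OF card_UN_le[OF fn]], rule sum_mono, rule order_trans[OF card_UN_le[OF fDL]], rule sum_mono,
        rule card_image_le, rule finite_sw[OF sgT lfT])
  have f1: "finite U1" unfolding U1_def using fDL by simp
  have f2: "finite U2" unfolding U2_def using fn fDL by (auto intro!: finite_sw[OF sgT lfT])
  have "card (sw TV TE {} n (Inr (b0, y0))) \<le> card (U1 \<union> U2)" by (rule card_mono[OF _ sub]) (use f1 f2 in simp)
  also have "\<dots> \<le> card U1 + card U2" by (rule card_Un_le)
  finally show ?thesis using c1 c2 by linarith
qed

lemma card_nbrs_sw1:
  assumes v: "v \<in> V"
  shows "card (sw V E {} 1 v) = card (nbrs E v)"
proof -
  have "card (sw V E {} (Suc 0) v) = (\<Sum>u\<in>nbrs E v. card (sw V E {v} 0 u))"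
    using card_sw_Suc[OF sg lf v, of "{}" 0] by simp
  also have "\<dots> = (\<Sum>u\<in>nbrs E v. 1)"
  proof (rule sum.cong[OF refl])
    fix u assume "u \<in> nbrs E v"
    then have "u \<in> V" "u \<noteq> v" using sg_edge[OF sg] sg_irrefl[OF sg] unfolding nbrs_def by auto
    then show "card (sw V E {v} 0 u) = 1" by (simp add: sw_0)
  qed
  finally show ?thesis by simp
qed

lemma tilde_bound_x:
  fixes x :: real
  assumes mu: "1 \<le> \<mu>" and UG: "unif_bound V E \<mu>"
    and x: "0 < x" "x \<le> 1" and hx: "hP GP x < inverse (\<mu>^2)"
  shows "\<exists>K0. \<forall>u\<in>TV. \<forall>n. sc TV TE u n * x ^ n \<le> K0"
proof -
  obtain CD where CD: "\<forall>u\<in>V. \<forall>j. sc V E u j \<le> CD * (\<mu> + 1) ^ j" using UG unfolding unif_bound_def by fastforce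
  define D where "D = max 0 (CD * (\<mu> + 1))"
  have D0: "0 \<le> D" unfolding D_def by simp
  have Dd: "\<forall>v\<in>V. real (card (nbrs E v)) \<le> D"
  proof
    fix v assume v: "v \<in> V"
    have "real (card (nbrs E v)) = sc V E v 1" using card_nbrs_sw1[OF v] by simp
    also have "\<dots> \<le> CD * (\<mu> + 1) ^ 1" using CD v by blast
    finally show "real (card (nbrs E v)) \<le> D" unfolding D_def by simp
  qed
  define h where "h = hP GP x"
  have h0: "0 \<le> h" unfolding h_def hP_def using x by (intro sum_nonneg) auto
  define r where "r = \<mu>^2 * h"
  have r1: "r < 1" using hx mu unfolding r_def h_def by (simp add: field_simps)
  have r0: "0 \<le> r" unfolding r_def using h0 by simp
  define e where "e = min 1 ((1 - r) / 6)"
  have e: "0 < e" "e \<le> 1" "e \<le> (1 - r) / 6" using r1 unfolding e_def by (auto simp: min_def)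
  define q where "q = (\<mu> + e)^2 * h"
  have q0: "0 \<le> q" unfolding q_def using h0 by simp
  have q1: "q < 1"
  proof -
    have "(\<mu> + e)^2 = \<mu>^2 + e * (2 * \<mu> + e)" by (simp add: power2_eq_square algebra_simps)
    also have "\<dots> \<le> \<mu>^2 + e * (3 * \<mu>)" using e mu by (intro add_left_mono mult_left_mono) auto
    finally have a0: "(\<mu> + e)^2 \<le> \<mu>^2 + e * (3 * \<mu>)" .
    have "(\<mu> + e)^2 * h \<le> (\<mu>^2 + e * (3 * \<mu>)) * h" using a0 h0 by (rule mult_right_mono)
    then have a: "(\<mu> + e)^2 * h \<le> r + e * 3 * (\<mu> * h)"
      unfolding r_def by (simp add: algebra_simps)
    have "\<mu> * h \<le> \<mu>^2 * h" using mu h0 by (intro mult_right_mono) (auto simp: power2_eq_square)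
    also have "\<dots> < 1" using r1 unfolding r_def .
    finally have "\<mu> * h \<le> 1" by simp
    then have "e * 3 * (\<mu> * h) \<le> e * 3 * 1" using e by (intro mult_left_mono) auto
    then have "e * 3 * (\<mu> * h) \<le> e * 3" by simp
    moreover have "e * 3 \<le> (1 - r) / 2" using e(3) by (simp add: field_simps)
    ultimately have "(\<mu> + e)^2 * h \<le> r + (1 - r) / 2" using a by linarith
    also have "\<dots> < 1" using r1 by (simp add: field_simps)
    finally show ?thesis unfolding q_def .
  qed
  obtain C0 where C0: "\<forall>u\<in>V. \<forall>j. sc V E u j \<le> C0 * (\<mu> + e) ^ j" using UG e unfolding unif_bound_def by blast
  define C where "C = max C0 1"
  have C: "\<forall>u\<in>V. \<forall>j. sc V E u j \<le> C * (\<mu> + e) ^ j"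
  proof (intro ballI allI)
    fix u j assume "u \<in> V"
    then have "sc V E u j \<le> C0 * (\<mu> + e) ^ j" using C0 by blast
    also have "\<dots> \<le> C * (\<mu> + e) ^ j" unfolding C_def using mu e by (intro mult_right_mono) auto
    finally show "sc V E u j \<le> C * (\<mu> + e) ^ j" .
  qed
  have C1: "1 \<le> C" unfolding C_def by simp
  define Q where "Q = (\<Sum>seg\<in>DL Vg. x ^ length seg)"
  define K where "K = 1 + D * Q"
  have Q0: "0 \<le> Q" unfolding Q_def using x by (intro sum_nonneg) auto
  have K1: "1 \<le> K" unfolding K_def using D0 Q0 by simp
  define Zb where "Zb = C / (1 - q)"
  have geo: "(\<Sum>m\<le>N. real (card (sw V E B (2*m) w)) * h ^ m) \<le> Zb" if w: "w \<in> V" for N B w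
  proof -
    have "(\<Sum>m\<le>N. real (card (sw V E B (2*m) w)) * h ^ m) \<le> (\<Sum>m\<le>N. C * q ^ m)"
    proof (rule sum_mono)
      fix m
      have "real (card (sw V E B (2*m) w)) \<le> sc V E w (2*m)" using card_sw_mono[OF sg lf, of "{}" B "2*m" w] by simp
      also have "\<dots> \<le> C * (\<mu> + e) ^ (2*m)" using C w by blast
      finally have "real (card (sw V E B (2*m) w)) * h ^ m \<le> C * (\<mu> + e) ^ (2*m) * h ^ m"
        using h0 by (intro mult_right_mono) auto
      also have "\<dots> = C * q ^ m" unfolding q_def by (simp add: power_mult power_mult_distrib)
      finally show "real (card (sw V E B (2*m) w)) * h ^ m \<le> C * q ^ m" .
    qed
    also have "\<dots> = C * (\<Sum>m\<le>N. q ^ m)" by (simp add: sum_distrib_left)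
    also have "(\<Sum>m\<le>N. q ^ m) \<le> 1 / (1 - q)"
    proof -
      have "(\<Sum>m\<le>N. q ^ m) = (\<Sum>m<Suc N. q ^ m)" by (simp only: lessThan_Suc_atMost)
      also have "\<dots> = (1 - q ^ Suc N) / (1 - q)" unfolding sum_gp_strict using q1 by simp
      also have "\<dots> \<le> 1 / (1 - q)" using q0 q1 by (intro divide_right_mono) auto
      finally show ?thesis .
    qed
    then have "C * (\<Sum>m\<le>N. q ^ m) \<le> C * (1 / (1 - q))" using C1 by (intro mult_left_mono) auto
    finally show ?thesis unfolding Zb_def by simp
  qed
  have Fb: "real (card (sw TV TE A n (Inl w))) * x ^ n \<le> K * Zb" if w: "w \<in> V" "\<not> chi w" for w n A
  proof -
    have "real (card (sw TV TE A n (Inl w))) * x ^ n \<le> (\<Sum>k\<le>n. real (card (sw TV TE A k (Inl w))) * x ^ k)"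
      using x by (intro member_le_sum) auto
    also have "\<dots> \<le> K * (\<Sum>m\<le>n. real (card (sw V E {} (2*m) w)) * h ^ m)"
      using AW[OF less_imp_le[OF x(1)] D0 Dd, of n] w invAB_empty[of A] unfolding K_def Q_def h_def by blast
    also have "\<dots> \<le> K * Zb" using geo[OF w(1)] K1 by (intro mult_left_mono) auto
    finally show ?thesis .
  qed
  have Zb0: "0 \<le> Zb" unfolding Zb_def using C1 q1 by simp
  define cDL where "cDL = real (card (DL Vg))"
  define K0 where "K0 = max (K * Zb) (cDL + 3 * cDL * (K * Zb))"
  show ?thesis
  proof (intro exI[of _ K0] ballI allI)
    fix u n assume u: "u \<in> TV"
    show "sc TV TE u n * x ^ n \<le> K0"
    proof (cases u)
      case (Inl w)
      then have "w \<in> V" "\<not> chi w" using u by auto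
      then show ?thesis using Fb[of w "{}" n] Inl unfolding K0_def by simp
    next
      case (Inr bx)
      then obtain b0 y0 where u': "u = Inr (b0, y0)" by (cases bx) auto
      have b0: "b0 \<in> V" "chi b0" using u u' by auto
      have xn: "x ^ k \<le> 1" for k using x by (simp add: power_le_one)
      have t1: "real (card {seg \<in> DL Vg. length seg = Suc n}) * x ^ n \<le> cDL"
      proof -
        have "real (card {seg \<in> DL Vg. length seg = Suc n}) \<le> cDL" unfolding cDL_def
          using card_mono[OF finite_DL[OF finVg], of "{seg \<in> DL Vg. length seg = Suc n}"] by auto
        then show ?thesis using xn[of n] x by (meson mult_left_le order_trans of_nat_0_le_iff zero_le_power less_imp_le)
      qed
      have t2: "(\<Sum>w1\<in>nbrs E b0. \<Sum>seg\<in>{seg \<in> DL Vg. length seg \<le> n}. real (card (sw TV TE (Ib b0 ` set seg) (n - length seg) (Inl w1)))) * x ^ n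
          \<le> 3 * cDL * (K * Zb)"
      proof -
        have "(\<Sum>w1\<in>nbrs E b0. \<Sum>seg\<in>{seg \<in> DL Vg. length seg \<le> n}. real (card (sw TV TE (Ib b0 ` set seg) (n - length seg) (Inl w1)))) * x ^ n
            = (\<Sum>w1\<in>nbrs E b0. \<Sum>seg\<in>{seg \<in> DL Vg. length seg \<le> n}. x ^ length seg * (real (card (sw TV TE (Ib b0 ` set seg) (n - length seg) (Inl w1))) * x ^ (n - length seg)))"
          unfolding sum_distrib_right
          by (intro sum.cong refl) (simp add: mult.commute mult.left_commute power_add[symmetric])
        also have "\<dots> \<le> (\<Sum>w1\<in>nbrs E b0. \<Sum>seg\<in>{seg \<in> DL Vg. length seg \<le> n}. K * Zb)"
        proof (intro sum_mono)
          fix w1 seg assume w1: "w1 \<in> nbrs E b0"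
          have e: "E b0 w1" using w1 unfolding nbrs_def by simp
          have w1V: "w1 \<in> V" "\<not> chi w1" using sg_edge[OF sg e] bip_E[OF e] b0 by auto
          have "real (card (sw TV TE (Ib b0 ` set seg) (n - length seg) (Inl w1))) * x ^ (n - length seg) \<le> K * Zb"
            by (rule Fb[OF w1V])
          moreover have "0 \<le> real (card (sw TV TE (Ib b0 ` set seg) (n - length seg) (Inl w1))) * x ^ (n - length seg)"
            using x by simp
          ultimately show "x ^ length seg * (real (card (sw TV TE (Ib b0 ` set seg) (n - length seg) (Inl w1))) * x ^ (n - length seg)) \<le> K * Zb"
            using xn[of "length seg"] x by (meson mult_left_le_one_le order_trans zero_le_power less_imp_le)
        qed
        also have "\<dots> = real (card (nbrs E b0)) * real (card {seg \<in> DL Vg. length seg \<le> n}) * (K * Zb)" by simp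
        also have "\<dots> \<le> 3 * cDL * (K * Zb)"
        proof -
          have "real (card (nbrs E b0)) = 3" using deg3 b0 by simp
          moreover have "real (card {seg \<in> DL Vg. length seg \<le> n}) \<le> cDL" unfolding cDL_def
            using card_mono[OF finite_DL[OF finVg], of "{seg \<in> DL Vg. length seg \<le> n}"] by auto
          ultimately show ?thesis using K1 Zb0 by (intro mult_right_mono) auto
        qed
        finally show ?thesis .
      qed
      have "sc TV TE u n * x ^ n \<le> (real (card {seg \<in> DL Vg. length seg = Suc n}) +
          (\<Sum>w1\<in>nbrs E b0. \<Sum>seg\<in>{seg \<in> DL Vg. length seg \<le> n}. real (card (sw TV TE (Ib b0 ` set seg) (n - length seg) (Inl w1))))) * x ^ n"
      proof (rule mult_right_mono)
        show "sc TV TE u n \<le> real (card {seg \<in> DL Vg. length seg = Suc n}) +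
          (\<Sum>w1\<in>nbrs E b0. \<Sum>seg\<in>{seg \<in> DL Vg. length seg \<le> n}. real (card (sw TV TE (Ib b0 ` set seg) (n - length seg) (Inl w1))))"
          using gadget_split_card[OF b0, of n y0] u' by (simp only: of_nat_sum[symmetric] of_nat_add[symmetric] of_nat_le_iff)
      qed (use x in simp)
      also have "\<dots> \<le> cDL + 3 * cDL * (K * Zb)" using t1 t2 by (simp add: distrib_right)
      finally show ?thesis unfolding K0_def by simp
    qed
  qed
qed

end


context setting
begin

lemma tilde_unif:
  assumes mu: "1 \<le> \<mu>" and UG: "unif_bound V E \<mu>" and xc: "0 < xc" "xc \<le> 1"
    and hless: "\<forall>x. 0 \<le> x \<longrightarrow> x < xc \<longrightarrow> hP GP x < inverse (\<mu>^2)"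
  shows "unif_bound TV TE (1/xc)"
  unfolding unif_bound_def
proof (intro allI impI)
  fix \<epsilon> :: real assume e: "0 < \<epsilon>"
  define x where "x = 1 / (1/xc + \<epsilon>)"
  have "0 < 1/xc + \<epsilon>" using xc e by (intro add_pos_pos) auto
  then have x0: "0 < x" unfolding x_def by simp
  have "1 / (1/xc + \<epsilon>) < 1 / (1/xc)"
    by (rule divide_strict_left_mono) (use xc e \<open>0 < 1/xc + \<epsilon>\<close> in auto)
  then have xlt: "x < xc" unfolding x_def by simp
  have x1: "x \<le> 1" using xlt xc by simp
  obtain K0 where K0: "\<forall>u\<in>TV. \<forall>n. sc TV TE u n * x ^ n \<le> K0"
    using tilde_bound_x[OF mu UG x0 x1] hless x0 xlt by auto
  show "\<exists>C. \<forall>u\<in>TV. \<forall>j. sc TV TE u j \<le> C * (1/xc + \<epsilon>) ^ j"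
  proof (intro exI[of _ K0] ballI allI)
    fix u j assume u: "u \<in> TV"
    have "sc TV TE u j * x ^ j \<le> K0" using K0 u by blast
    moreover have "x ^ j * (1/xc + \<epsilon>) ^ j = 1" unfolding x_def using \<open>0 < 1/xc + \<epsilon>\<close>
      by (simp add: power_mult_distrib[symmetric])
    ultimately have "sc TV TE u j * x ^ j * (1/xc + \<epsilon>) ^ j \<le> K0 * (1/xc + \<epsilon>) ^ j"
      using xc e by (intro mult_right_mono) auto
    then show "sc TV TE u j \<le> K0 * (1/xc + \<epsilon>) ^ j"
      using \<open>x ^ j * (1/xc + \<epsilon>) ^ j = 1\<close> by (simp add: mult.assoc)
  qed
qed

end

theorem theorem3p5:
  fixes V :: "'a set" and E :: "'a \<Rightarrow> 'a \<Rightarrow> bool" and chi :: "'a \<Rightarrow> bool"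
    and Vg :: "'c set" and Eg :: "'c \<Rightarrow> 'c \<Rightarrow> bool" and p :: "nat \<Rightarrow> 'c"
    and att :: "'a \<Rightarrow> 'a \<Rightarrow> nat"
  assumes "simple_graph V E" and "infinite V" and "graph_connected V E"
    and "locally_finite V E"
    and "bipartite_colouring V E chi"
    and "coloured_quasi_transitive V E chi"
    and "\<forall>v\<in>V. chi v \<longrightarrow> card (nbrs E v) = 3"
    and "local_transformation Vg Eg p"
    and "\<forall>b\<in>V. chi b \<longrightarrow> bij_betw (att b) (nbrs E b) {0,1,2}"
    and "graph_connected (tilde_V V chi Vg) (tilde_E V E chi Eg p att)"
  shows "\<exists>\<mu> \<mu>t. has_connective_constant V E \<mu> \<and>
           has_connective_constant (tilde_V V chi Vg) (tilde_E V E chi Eg p att) \<mu>t \<and>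
           inverse (\<mu> ^ 2) = inverse \<mu>t * gadget_series Vg Eg p (inverse \<mu>t)"
proof -
  note sg = assms(1) and inf = assms(2) and con = assms(3) and lf = assms(4) and bip = assms(5)
    and qt = assms(6) and deg3 = assms(7) and lt = assms(8) and attb = assms(9) and conT = assms(10)
  interpret S: setting V E chi Vg Eg p att
    using sg lf bip deg3 lt attb by unfold_locales
  obtain \<mu> where mu: "1 \<le> \<mu>" and UG: "unif_bound V E \<mu>" and LG: "\<forall>v\<in>V. lowb V E \<mu> v"
    using hammersley[OF sg inf con lf qt] by blast
  have ccG: "has_connective_constant V E \<mu>" by (rule cc_from[OF mu UG LG])
  define GP where "GP = PP Vg Eg p 0 1"
  have finGP: "finite GP" unfolding GP_def by (rule finite_PP[OF S.finVg])
  have neGP: "GP \<noteq> {}" unfolding GP_def by (rule GP_nonempty[OF lt])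
  have cGP: "1 \<le> real (card GP)" using finGP neGP by (simp add: Suc_le_eq card_gt_0_iff)
  define y where "y = inverse (\<mu>^2)"
  have y: "0 < y" "y \<le> real (card GP)"
  proof -
    show "0 < y" unfolding y_def using mu by simp
    have "y \<le> 1" unfolding y_def using mu by (simp add: power_le_one_iff field_simps one_le_power)
    then show "y \<le> real (card GP)" using cGP by simp
  qed
  obtain xc where xc: "0 < xc" "xc \<le> 1" "hP GP xc = y" "\<forall>x. 0 \<le> x \<longrightarrow> x < xc \<longrightarrow> hP GP x < y"
    using xc_exists[OF finGP neGP y] by blast
  have UT: "unif_bound S.TV S.TE (1/xc)"
    by (rule S.tilde_unif[OF mu UG xc(1,2)]) (use xc(4) in \<open>simp add: GP_def y_def\<close>)
  have muT: "1 \<le> 1/xc" using xc by simp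
  obtain v0 where v0: "v0 \<in> V" using inf by (metis ex_in_conv finite.emptyI)
  obtain w0 where w0: "w0 \<in> V" "\<not> chi w0"
  proof (cases "chi v0")
    case False then show ?thesis using that v0 by blast
  next
    case True
    then have "card (nbrs E v0) = 3" using deg3 v0 by blast
    then obtain w where "w \<in> nbrs E v0" by (metis card.empty ex_in_conv zero_neq_numeral)
    then have e: "E v0 w" unfolding nbrs_def by simp
    show ?thesis using that sg_edge[OF sg e] S.bip_E[OF e] True by auto
  qed
  define L where "L = card Vg + 1"
  have Lb: "\<forall>xs\<in>GP. length xs + 1 \<le> L" unfolding L_def GP_def
    using DL_length[OF _ S.finVg] PP_DL by fastforce
  have L3: "\<forall>xs\<in>GP. 3 \<le> length xs + 1"
  proof
    fix xs assume "xs \<in> GP"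
    moreover have "p 0 \<noteq> p 1" using S.pinj[of 0 1] by auto
    ultimately have "2 \<le> length xs" unfolding GP_def by (rule PP_len2)
    then show "3 \<le> length xs + 1" by simp
  qed
  obtain C0 where C0: "\<forall>u\<in>S.TV. \<forall>j. sc S.TV S.TE u j \<le> C0 * (1/xc + 1) ^ j"
    using UT unfolding unif_bound_def by (metis zero_less_one)
  define C where "C = max C0 1"
  define K where "K = 1/xc + 1"
  have C1: "1 \<le> C" and K1: "1 \<le> K" unfolding C_def K_def using xc by auto
  have UC: "sc S.TV S.TE u j \<le> C * K ^ j" for u j
  proof (cases "u \<in> S.TV")
    case True
    have "sc S.TV S.TE u j \<le> C0 * K ^ j" using C0 True unfolding K_def by blast
    also have "\<dots> \<le> C * K ^ j" unfolding C_def using K1 by (intro mult_right_mono) auto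
    finally show ?thesis .
  next
    case False then show ?thesis using C1 K1 by (simp add: sw_empty)
  qed
  have lowT0: "lowb S.TV S.TE (1/xc) (Inl w0)" unfolding lowb_def
  proof (rule white_lower_abstract[where s = "sc V E w0" and A = "Acnt GP" and L = L and C = C and K = K, OF mu xc(1)])
    show "\<And>n. 0 \<le> sc S.TV S.TE (Inl w0) n" by simp
    show "\<And>m n. sc V E w0 (2 * m) * Acnt GP m n \<le> sc S.TV S.TE (Inl w0) n"
      unfolding GP_def by (rule S.white_series[OF w0])
    show "\<forall>\<eta>>0. \<eta> < \<mu> \<longrightarrow> (\<exists>c>0. \<forall>n. c * (\<mu> - \<eta>) ^ n \<le> sc V E w0 n)"
      using LG w0 unfolding lowb_def by blast
    show "\<And>m. (\<Sum>n\<le>m * L. Acnt GP m n * xc ^ n) = inverse (\<mu>^2) ^ m"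
      using Acnt_gf[OF finGP Lb] xc(3) unfolding hP_def y_def by simp
    show "\<And>m n. 0 \<le> Acnt GP m n" by (rule Acnt_nn)
    show "\<And>m n k. Acnt GP m n ^ k \<le> Acnt GP (k * m) (k * n)" by (rule Acnt_pow[OF finGP])
    show "\<And>m n. n < 3 * m \<Longrightarrow> Acnt GP m n = 0" by (rule Acnt_zero[OF L3])
    show "\<And>N t. sc S.TV S.TE (Inl w0) (N + t) \<le> sc S.TV S.TE (Inl w0) N * (C * K ^ t)"
      by (rule sw_submult[OF S.sgT S.lfT UC])
  qed (use C1 K1 in auto)
  have LT: "\<forall>v\<in>S.TV. lowb S.TV S.TE (1/xc) v"
  proof
    fix v assume v: "v \<in> S.TV"
    have w0T: "Inl w0 \<in> S.TV" using w0 by simp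
    have "S.TE\<^sup>*\<^sup>* (Inl w0) v" using conT v w0T unfolding graph_connected_def by blast
    then obtain k where k: "(S.TE ^^ k) (Inl w0) v" unfolding rtranclp_power by blast
    have "nearQ S.TV S.TE (1/xc) v k" unfolding nearQ_def
    proof (intro allI impI)
      fix \<delta> :: real assume d: "0 < \<delta>" "\<delta> < 1/xc"
      obtain c where c: "c > 0" "\<forall>n. c * (1/xc - \<delta>) ^ n \<le> sc S.TV S.TE (Inl w0) n"
        using lowT0 d unfolding lowb_def by blast
      show "\<exists>c>0. \<forall>n. \<exists>y\<in>S.TV. (\<exists>k'\<le>k. (S.TE ^^ k') y v) \<and> c * (1/xc - \<delta>) ^ n \<le> sc S.TV S.TE y n"
        using c w0T k by blast
    qed
    then show "lowb S.TV S.TE (1/xc) v"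
      unfolding lowb_def using nearQ_lower[OF S.sgT S.lfT muT UT] by blast
  qed
  have ccT: "has_connective_constant S.TV S.TE (1/xc)" by (rule cc_from[OF muT UT LT])
  have rel: "inverse (\<mu> ^ 2) = inverse (1/xc) * gadget_series Vg Eg p (inverse (1/xc))"
  proof -
    have "inverse (1/xc) * gadget_series Vg Eg p (inverse (1/xc)) = xc * (\<Sum>xs\<in>GP. xc ^ length xs)"
      unfolding gadget_series_def gadget_paths_PP GP_def by simp
    also have "\<dots> = hP GP xc" unfolding hP_def by (simp add: sum_distrib_left)
    finally show ?thesis using xc(3) unfolding y_def by simp
  qed
  show ?thesis using ccG ccT rel by blast
qed


end
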